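(* Let $\mathcal{M}\subset\mathbb{R}^K$ be a submanifold with geodesic distance $d_{\mathcal{M}}$ and $\mu$ a Borel probability measure on $\mathcal{M}$. Let $p_2\in(0,0.5]$ and let $\mathcal{V}=\{X_1,\dots,X_n\}$, $n\ge4$, be an i.i.d. sample from $\mu$. Then with probability at least $1-p_2$, for all $i\in\{1,\dots,n\}$ and all $r>0$, $$\Big|\sqrt{\eta_1(B_{\mathcal{M}}(X_i,r))}-\sqrt{\mu(B_{\mathcal{M}}(X_i,r))}\Big|\le2\sqrt{\frac{-\ln\big(\frac{p_2}{4n^2}\big)}{n}}.$$
   Context: $B_{\mathcal{M}}(x,r)=\{y\in\mathcal{M}:d_{\mathcal{M}}(x,y)<r\}$; $\eta_1(W)=\frac1n\sum_{j=1}^n\mathbf{1}_{X_j\in W}$ is the empirical measure of the sample. *)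

theory Defs
  imports "HOL-Analysis.Analysis" "HOL-Probability.Probability"
begin

definition C1_on :: "'a::euclidean_space set \<Rightarrow> ('a \<Rightarrow> 'b::euclidean_space) \<Rightarrow> bool" where
  "C1_on U f \<longleftrightarrow> (\<exists>D :: 'a \<Rightarrow> 'a \<Rightarrow>\<^sub>L 'b.
      (\<forall>y\<in>U. (f has_derivative blinfun_apply (D y)) (at y)) \<and> continuous_on U D)"

definition submanifold :: "'a::euclidean_space set \<Rightarrow> bool" where
  "submanifold M \<longleftrightarrow> (\<exists>k::nat. \<forall>x\<in>M. \<exists>U V (\<phi>::'a \<Rightarrow> 'a) \<psi> S.
      open U \<and> x \<in> U \<and> open V \<and> subspace S \<and> dim S = k \<and>
      \<phi> ` U = V \<and> (\<forall>y\<in>U. \<psi> (\<phi> y) = y) \<and> (\<forall>z\<in>V. \<phi> (\<psi> z) = z) \<and>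
      C1_on U \<phi> \<and> C1_on V \<psi> \<and> \<phi> ` (U \<inter> M) = V \<inter> S)"

definition path_len :: "(real \<Rightarrow> 'a::real_normed_vector) \<Rightarrow> ereal" where
  "path_len g = (SUP ts \<in> {ts. sorted ts \<and> set ts \<subseteq> {0..1}}.
      ereal (\<Sum>i<length ts - 1. dist (g (ts ! i)) (g (ts ! Suc i))))"

definition geodesic_dist :: "'a::real_normed_vector set \<Rightarrow> 'a \<Rightarrow> 'a \<Rightarrow> ereal" where
  "geodesic_dist M x y = (INF g \<in> {g. path g \<and> path_image g \<subseteq> M \<and> pathstart g = x \<and> pathfinish g = y}.
      path_len g)"

definition geodesic_ball :: "'a::real_normed_vector set \<Rightarrow> 'a \<Rightarrow> real \<Rightarrow> 'a set" where
  "geodesic_ball M x r = {y \<in> M. geodesic_dist M x y < ereal r}"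

definition emp_measure :: "nat \<Rightarrow> (nat \<Rightarrow> 'w \<Rightarrow> 'a) \<Rightarrow> 'w \<Rightarrow> 'a set \<Rightarrow> real" where
  "emp_measure n X \<omega> W = real (card {j \<in> {..<n}. X j \<omega> \<in> W}) / real n"

end

theory Submission
  imports Defs
begin


fun psum :: "(real \<Rightarrow> 'a::real_normed_vector) \<Rightarrow> real list \<Rightarrow> real" where
  "psum g (a # b # rest) = dist (g a) (g b) + psum g (b # rest)"
| "psum g _ = 0"

lemma psum_eq: "(\<Sum>i<length ts - 1. dist (g (ts ! i)) (g (ts ! Suc i))) = psum g ts"
proof (induction g ts rule: psum.induct)
  case (1 g a b rest)
  then show ?case by (simp add: sum.lessThan_Suc_shift del: sum.lessThan_Suc)
qed auto

lemma path_len_psum: "path_len g = (SUP ts \<in> {ts. sorted ts \<and> set ts \<subseteq> {0..1}}. ereal (psum g ts))"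
  unfolding path_len_def psum_eq ..

lemma psum_nonneg: "psum g ts \<ge> 0"
  by (induction g ts rule: psum.induct) auto

lemma path_len_nonneg: "path_len g \<ge> 0"
  unfolding path_len_psum
  by (rule SUP_upper2[of "[]"]) auto

lemma path_len_le:
  assumes "\<And>ts. sorted ts \<Longrightarrow> set ts \<subseteq> {0..1} \<Longrightarrow> psum g ts \<le> c"
  shows "path_len g \<le> ereal c"
  unfolding path_len_psum using assms by (auto intro!: SUP_least)

lemma psum_le_path_len:
  assumes "sorted ts" "set ts \<subseteq> {0..1}"
  shows "ereal (psum g ts) \<le> path_len g"
  unfolding path_len_psum using assms by (auto intro!: SUP_upper)

lemma psum_lip:
  assumes L: "\<forall>s\<in>{0..1}. \<forall>t\<in>{0..1}. dist (g s) (g t) \<le> L * \<bar>s - t\<bar>"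
  shows "sorted ts \<Longrightarrow> set ts \<subseteq> {0..1} \<Longrightarrow> ts \<noteq> [] \<Longrightarrow> psum g ts \<le> L * (last ts - hd ts)"
proof (induction ts)
  case (Cons a rest)
  show ?case
  proof (cases rest)
    case (Cons b rest')
    have ab: "a \<le> b" using Cons.prems Cons by auto
    have ab01: "a \<in> {0..1}" "b \<in> {0..1}" using Cons.prems Cons by auto
    have "dist (g a) (g b) \<le> L * \<bar>a - b\<bar>" using L ab01 by blast
    also have "\<bar>a - b\<bar> = b - a" using ab by simp
    finally have "dist (g a) (g b) \<le> L * (b - a)" .
    moreover have "psum g rest \<le> L * (last rest - hd rest)" using Cons.IH Cons.prems Cons by auto
    ultimately show ?thesis using Cons by (simp add: algebra_simps)
  qed simp
qed simp

lemma path_len_lip: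
  assumes L: "\<forall>s\<in>{0..1}. \<forall>t\<in>{0..1}. dist (g s) (g t) \<le> L * \<bar>s - t\<bar>" and "L \<ge> 0"
  shows "path_len g \<le> ereal L"
proof (rule path_len_le)
  fix ts :: "real list" assume ts: "sorted ts" "set ts \<subseteq> {0..1}"
  show "psum g ts \<le> L"
  proof (cases "ts = []")
    case False
    have "last ts \<in> {0..1}" "hd ts \<in> {0..1}" using ts False last_in_set hd_in_set by blast+
    hence "L * (last ts - hd ts) \<le> L * 1" using \<open>L \<ge> 0\<close> by (intro mult_left_mono) auto
    then show ?thesis using psum_lip[OF L ts False] by simp
  qed (use \<open>L \<ge> 0\<close> in simp)
qed

lemma psum_split:
  "sorted ts \<Longrightarrow> psum g ts \<le> psum g (filter (\<lambda>t. t \<le> c) ts @ [c]) + psum g (c # filter (\<lambda>t. \<not> t \<le> c) ts)"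
proof (induction ts)
  case Nil
  then show ?case by simp
next
  case (Cons a rest)
  have srt: "sorted rest" "\<forall>x\<in>set rest. a \<le> x" using Cons.prems by auto
  show ?case
  proof (cases "a \<le> c")
    case True
    show ?thesis
    proof (cases rest)
      case Nil
      then show ?thesis using True by (simp add: psum_nonneg)
    next
      case (Cons b rest')
      show ?thesis
      proof (cases "b \<le> c")
        case True
        then show ?thesis using Cons.IH srt \<open>a \<le> c\<close> \<open>rest = b # rest'\<close> by simp
      next
        case False
        have all: "\<forall>x\<in>set rest'. \<not> x \<le> c" using srt \<open>rest = b # rest'\<close> False by auto
        hence f1: "filter (\<lambda>t. t \<le> c) rest' = []" and f2: "filter (\<lambda>t. \<not> t \<le> c) rest' = rest'"
          by (auto simp: filter_empty_conv filter_id_conv)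
        have "dist (g a) (g b) \<le> dist (g a) (g c) + dist (g c) (g b)" by (rule dist_triangle)
        then show ?thesis using \<open>a \<le> c\<close> False f1 f2 \<open>rest = b # rest'\<close> by simp
      qed
    qed
  next
    case False
    have all: "\<forall>x\<in>set (a # rest). \<not> x \<le> c" using srt False by auto
    hence f1: "filter (\<lambda>t. t \<le> c) (a # rest) = []" and f2: "filter (\<lambda>t. \<not> t \<le> c) (a # rest) = a # rest"
      by (auto simp: filter_empty_conv filter_id_conv simp del: filter.simps)
    show ?thesis unfolding f1 f2 by (simp add: zero_le_dist)
  qed
qed

lemma psum_cong: "(\<And>t. t \<in> set ts \<Longrightarrow> f t = h t) \<Longrightarrow> psum f ts = psum h ts"
  by (induction f ts rule: psum.induct) auto

lemma psum_map: "psum g (map h ts) = psum (g \<circ> h) ts"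
  by (induction "g \<circ> h" ts rule: psum.induct) auto

lemma path_len_join:
  assumes "g1 1 = g2 0"
  shows "path_len (g1 +++ g2) \<le> path_len g1 + path_len g2"
proof (unfold path_len_psum[of "g1 +++ g2"], rule SUP_least, clarify)
  fix ts :: "real list" assume ts: "sorted ts" "set ts \<subseteq> {0..1}"
  define L1 where "L1 = filter (\<lambda>t. t \<le> 1/2) ts @ [1/2]"
  define L2 where "L2 = (1/2::real) # filter (\<lambda>t. \<not> t \<le> 1/2) ts"
  have "psum (g1 +++ g2) ts \<le> psum (g1 +++ g2) L1 + psum (g1 +++ g2) L2"
    unfolding L1_def L2_def by (rule psum_split[OF ts(1)])
  also have "psum (g1 +++ g2) L1 = psum (g1 \<circ> (\<lambda>t. 2 * t)) L1"
    by (rule psum_cong) (auto simp: L1_def joinpaths_def)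
  also have "\<dots> = psum g1 (map (\<lambda>t. 2 * t) L1)" by (simp add: psum_map)
  also have "psum (g1 +++ g2) L2 = psum (g2 \<circ> (\<lambda>t. 2 * t - 1)) L2"
  proof (rule psum_cong)
    fix t assume "t \<in> set L2"
    hence "t \<ge> 1/2" by (auto simp: L2_def)
    show "(g1 +++ g2) t = (g2 \<circ> (\<lambda>t. 2 * t - 1)) t"
    proof (cases "t = 1/2")
      case True
      show ?thesis using assms unfolding joinpaths_def True by simp
    next
      case False
      then show ?thesis using \<open>t \<ge> 1/2\<close> by (simp add: joinpaths_def)
    qed
  qed
  also have "\<dots> = psum g2 (map (\<lambda>t. 2 * t - 1) L2)" by (simp add: psum_map)
  finally have *: "psum (g1 +++ g2) ts \<le> psum g1 (map (\<lambda>t. 2 * t) L1) + psum g2 (map (\<lambda>t. 2 * t - 1) L2)" .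
  have s1: "sorted (map (\<lambda>t. 2 * t) L1)" "set (map (\<lambda>t. 2 * t) L1) \<subseteq> {0..1}"
    using ts by (auto simp: L1_def sorted_append sorted_filter sorted_map intro: sorted_wrt_filter)
  have s2: "sorted (map (\<lambda>t. 2 * t - 1) L2)" "set (map (\<lambda>t. 2 * t - 1) L2) \<subseteq> {0..1}"
    using ts by (auto simp: L2_def sorted_map intro: sorted_wrt_filter)
  have "ereal (psum (g1 +++ g2) ts) \<le> ereal (psum g1 (map (\<lambda>t. 2 * t) L1)) + ereal (psum g2 (map (\<lambda>t. 2 * t - 1) L2))"
    using * by simp
  also have "\<dots> \<le> path_len g1 + path_len g2"
    by (intro add_mono psum_le_path_len s1 s2)
  finally show "ereal (psum (g1 +++ g2) ts) \<le> path_len g1 + path_len g2" .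
qed

lemma geodesic_dist_nonneg: "geodesic_dist M x y \<ge> 0"
  unfolding geodesic_dist_def by (rule INF_greatest) (rule path_len_nonneg)

lemma geodesic_dist_le_path:
  assumes "path g" "path_image g \<subseteq> M" "pathstart g = x" "pathfinish g = y"
  shows "geodesic_dist M x y \<le> path_len g"
  unfolding geodesic_dist_def using assms by (intro INF_lower) auto

lemma geodesic_dist_triangle:
  "geodesic_dist M x z \<le> geodesic_dist M x y + geodesic_dist M y z"
proof -
  define P1 where "P1 = {g. path g \<and> path_image g \<subseteq> M \<and> pathstart g = x \<and> pathfinish g = y}"
  define P2 where "P2 = {g. path g \<and> path_image g \<subseteq> M \<and> pathstart g = y \<and> pathfinish g = z}"
  have d1: "geodesic_dist M x y = (INF g\<in>P1. path_len g)" unfolding P1_def geodesic_dist_def ..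
  have d2: "geodesic_dist M y z = (INF g\<in>P2. path_len g)" unfolding P2_def geodesic_dist_def ..
  show ?thesis
  proof (cases "P1 = {} \<or> P2 = {}")
    case True
    then show ?thesis
    proof
      assume "P1 = {}"
      hence "geodesic_dist M x y = \<infinity>" using d1 by (simp add: top_ereal_def)
      moreover have "geodesic_dist M y z \<noteq> -\<infinity>" using geodesic_dist_nonneg[of M y z] by auto
      ultimately show ?thesis by simp
    next
      assume "P2 = {}"
      hence "geodesic_dist M y z = \<infinity>" using d2 by (simp add: top_ereal_def)
      moreover have "geodesic_dist M x y \<noteq> -\<infinity>" using geodesic_dist_nonneg[of M x y] by auto
      ultimately show ?thesis by simp
    qed
  next
    case False
    have "geodesic_dist M x z \<le> (INF g1\<in>P1. (INF g2\<in>P2. path_len g1 + path_len g2))"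
    proof (intro INF_greatest)
      fix g1 g2 assume g1: "g1 \<in> P1" and g2: "g2 \<in> P2"
      have "geodesic_dist M x z \<le> path_len (g1 +++ g2)"
        using g1 g2 unfolding P1_def P2_def
        by (intro geodesic_dist_le_path) (auto simp: path_image_join)
      also have "\<dots> \<le> path_len g1 + path_len g2"
        using g1 g2 unfolding P1_def P2_def pathstart_def pathfinish_def by (intro path_len_join) auto
      finally show "geodesic_dist M x z \<le> path_len g1 + path_len g2" .
    qed
    also have "\<dots> = (INF g1\<in>P1. path_len g1 + geodesic_dist M y z)"
    proof (rule INF_cong[OF refl])
      fix g1 assume "g1 \<in> P1"
      have "path_len g1 \<noteq> -\<infinity>" using path_len_nonneg[of g1] by auto
      then show "(INF g2\<in>P2. path_len g1 + path_len g2) = path_len g1 + geodesic_dist M y z"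
        unfolding d2 using False by (intro INF_ereal_add_right) (auto intro: path_len_nonneg)
    qed
    also have "\<dots> = geodesic_dist M x y + geodesic_dist M y z"
    proof -
      have "geodesic_dist M y z \<noteq> -\<infinity>" using geodesic_dist_nonneg[of M y z] by auto
      then show ?thesis unfolding d1 using False by (intro INF_ereal_add_left) (auto intro: path_len_nonneg)
    qed
    finally show ?thesis .
  qed
qed

lemma path_len_const: "path_len (\<lambda>t. c) = 0"
proof -
  have "path_len (\<lambda>t. c) \<le> ereal 0" by (rule path_len_lip) auto
  then show ?thesis using path_len_nonneg[of "\<lambda>t. c"] by (metis antisym zero_ereal_def)
qed

lemma geodesic_dist_refl: "x \<in> M \<Longrightarrow> geodesic_dist M x x = 0"
proof -
  assume "x \<in> M"
  have "geodesic_dist M x x \<le> path_len (\<lambda>t. x)"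
    using \<open>x \<in> M\<close> by (intro geodesic_dist_le_path) (auto simp: path_def pathstart_def pathfinish_def path_image_def)
  then show ?thesis using path_len_const[of x] geodesic_dist_nonneg[of M x x] by simp
qed

lemma seg_geodesic:
  fixes \<psi> :: "'a::real_normed_vector \<Rightarrow> 'a"
  assumes T: "convex T" "a \<in> T" "b \<in> T" and TM: "\<And>w. w \<in> T \<Longrightarrow> \<psi> w \<in> M"
    and lip: "\<And>u v. u \<in> T \<Longrightarrow> v \<in> T \<Longrightarrow> norm (\<psi> u - \<psi> v) \<le> B * norm (u - v)"
    and B: "B \<ge> 0"
  shows "geodesic_dist M (\<psi> a) (\<psi> b) \<le> ereal (B * norm (b - a))"
proof -
  define \<gamma> where "\<gamma> = (\<lambda>t::real. \<psi> (a + t *\<^sub>R (b - a)))"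
  have inT: "a + t *\<^sub>R (b - a) \<in> T" if "t \<in> {0..1}" for t
  proof -
    have "a + t *\<^sub>R (b - a) = (1 - t) *\<^sub>R a + t *\<^sub>R b" by (simp add: algebra_simps)
    then show ?thesis using T that convexD_alt by fastforce
  qed
  have L: "dist (\<gamma> s) (\<gamma> t) \<le> (B * norm (b - a)) * \<bar>s - t\<bar>" if "s \<in> {0..1}" "t \<in> {0..1}" for s t
  proof -
    have "dist (\<gamma> s) (\<gamma> t) \<le> B * norm ((a + s *\<^sub>R (b - a)) - (a + t *\<^sub>R (b - a)))"
      unfolding \<gamma>_def dist_norm using lip inT that by blast
    also have "(a + s *\<^sub>R (b - a)) - (a + t *\<^sub>R (b - a)) = (s - t) *\<^sub>R (b - a)" by (simp add: algebra_simps)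
    also have "B * norm \<dots> = (B * norm (b - a)) * \<bar>s - t\<bar>" by simp
    finally show ?thesis .
  qed
  have lipo: "(B * norm (b - a))-lipschitz_on {0..1} \<gamma>"
    by (rule lipschitz_onI) (use L B in \<open>auto simp: dist_real_def\<close>)
  have "path \<gamma>" unfolding path_def using lipschitz_on_continuous_on[OF lipo] .
  moreover have "path_image \<gamma> \<subseteq> M" unfolding path_image_def \<gamma>_def using TM inT by auto
  moreover have "pathstart \<gamma> = \<psi> a" "pathfinish \<gamma> = \<psi> b" unfolding pathstart_def pathfinish_def \<gamma>_def by auto
  ultimately have "geodesic_dist M (\<psi> a) (\<psi> b) \<le> path_len \<gamma>" by (intro geodesic_dist_le_path)
  also have "\<dots> \<le> ereal (B * norm (b - a))" using L B by (intro path_len_lip) auto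
  finally show ?thesis .
qed

lemma chart_local:
  fixes M :: "'a::euclidean_space set"
  assumes sm: "submanifold M" and xM: "x \<in> M" and eta: "\<eta> > 0"
  shows "\<exists>e>0. \<forall>x'\<in>M. dist x' x < e \<longrightarrow> geodesic_dist M x x' < ereal \<eta> \<and> geodesic_dist M x' x < ereal \<eta>"
proof -
  obtain k :: nat where kk: "\<forall>x\<in>M. \<exists>U V (\<phi>::'a \<Rightarrow> 'a) \<psi> S.
      open U \<and> x \<in> U \<and> open V \<and> subspace S \<and> dim S = k \<and>
      \<phi> ` U = V \<and> (\<forall>y\<in>U. \<psi> (\<phi> y) = y) \<and> (\<forall>z\<in>V. \<phi> (\<psi> z) = z) \<and>
      C1_on U \<phi> \<and> C1_on V \<psi> \<and> \<phi> ` (U \<inter> M) = V \<inter> S"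
    using sm unfolding submanifold_def by (elim exE) (rule that)
  from kk[rule_format, OF xM] obtain U V and \<phi> \<psi> :: "'a \<Rightarrow> 'a" and S where
    U: "open U" "x \<in> U" and V: "open V" and S: "subspace S" and phiU: "\<phi> ` U = V"
    and psiphi: "\<forall>y\<in>U. \<psi> (\<phi> y) = y" and C1phi: "C1_on U \<phi>" and C1psi: "C1_on V \<psi>"
    and img: "\<phi> ` (U \<inter> M) = V \<inter> S"
    by (elim exE conjE) (rule that)
  from C1psi obtain D :: "'a \<Rightarrow> 'a \<Rightarrow>\<^sub>L 'a" where
    dD: "\<forall>y\<in>V. (\<psi> has_derivative blinfun_apply (D y)) (at y)" and cD: "continuous_on V D"
    unfolding C1_on_def by blast
  from C1phi obtain D' :: "'a \<Rightarrow> 'a \<Rightarrow>\<^sub>L 'a" where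
    dD': "\<forall>y\<in>U. (\<phi> has_derivative blinfun_apply (D' y)) (at y)"
    unfolding C1_on_def by blast
  have contphi: "continuous (at x) \<phi>" using has_derivative_continuous[OF dD'[rule_format, OF U(2)]] .
  have phixV: "\<phi> x \<in> V" unfolding phiU[symmetric] using U(2) by (rule imageI)
  obtain \<delta> where \<delta>: "\<delta> > 0" "cball (\<phi> x) \<delta> \<subseteq> V" using V phixV open_contains_cball by blast
  have contD: "continuous_on (cball (\<phi> x) \<delta>) D" using cD \<delta>(2) by (rule continuous_on_subset)
  obtain B where B: "B \<ge> 0" "\<And>w. w \<in> cball (\<phi> x) \<delta> \<Longrightarrow> norm (D w) \<le> B"
    by (rule continuous_on_compact_bound[OF compact_cball contD]) blast
  define T where "T = cball (\<phi> x) \<delta> \<inter> S"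
  have convT: "convex T" unfolding T_def using S by (intro convex_Int convex_cball subspace_imp_convex)
  have lipC: "norm (\<psi> u - \<psi> v) \<le> B * norm (u - v)" if "u \<in> cball (\<phi> x) \<delta>" "v \<in> cball (\<phi> x) \<delta>" for u v
  proof (rule differentiable_bound[where f'="\<lambda>w. blinfun_apply (D w)"])
    show "convex (cball (\<phi> x) \<delta>)" by simp
    show "(\<psi> has_derivative blinfun_apply (D w)) (at w within cball (\<phi> x) \<delta>)" if "w \<in> cball (\<phi> x) \<delta>" for w
    proof (rule has_derivative_at_withinI)
      have "w \<in> V" using \<delta>(2) that by blast
      then show "(\<psi> has_derivative blinfun_apply (D w)) (at w)" using dD by blast
    qed
    show "onorm (blinfun_apply (D w)) \<le> B" if "w \<in> cball (\<phi> x) \<delta>" for w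
      using B(2)[OF that] by (simp add: norm_blinfun.rep_eq[symmetric])
  qed (use that in auto)
  have lipT: "norm (\<psi> u - \<psi> v) \<le> B * norm (u - v)" if "u \<in> T" "v \<in> T" for u v
    using lipC that unfolding T_def by blast
  have TM: "\<psi> w \<in> M" if "w \<in> T" for w
  proof -
    have "w \<in> V \<inter> S" using that \<delta>(2) unfolding T_def by blast
    hence "w \<in> \<phi> ` (U \<inter> M)" unfolding img .
    then obtain u where "u \<in> U \<inter> M" "w = \<phi> u" by (rule imageE)
    then show ?thesis using psiphi by auto
  qed
  define \<eta>' where "\<eta>' = min \<delta> (\<eta> / (B + 1))"
  have \<eta>': "\<eta>' > 0" unfolding \<eta>'_def using \<delta> eta B by auto
  obtain e1 where e1: "e1 > 0" "\<forall>y. dist y x < e1 \<longrightarrow> dist (\<phi> y) (\<phi> x) < \<eta>'"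
    using contphi[unfolded continuous_at_eps_delta, rule_format, OF \<eta>'] by (elim exE conjE) (rule that)
  obtain e2 where e2: "e2 > 0" "ball x e2 \<subseteq> U" using U open_contains_ball by blast
  show ?thesis
  proof (intro exI[of _ "min e1 e2"] conjI ballI impI)
    show "min e1 e2 > 0" using e1 e2 by simp
    fix x' assume x'M: "x' \<in> M" and dx: "dist x' x < min e1 e2"
    have "x' \<in> ball x e2" using dx by (simp add: dist_commute)
    hence x'U: "x' \<in> U" using e2(2) by blast
    have dphi: "dist (\<phi> x') (\<phi> x) < \<eta>'" using e1(2) dx by simp
    have "\<phi> x' \<in> \<phi> ` (U \<inter> M)" "\<phi> x \<in> \<phi> ` (U \<inter> M)" using x'U x'M U(2) xM by auto
    hence "\<phi> x' \<in> S" "\<phi> x \<in> S" unfolding img by auto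
    moreover have "\<phi> x' \<in> cball (\<phi> x) \<delta>" "\<phi> x \<in> cball (\<phi> x) \<delta>"
      using dphi \<delta> unfolding \<eta>'_def by (auto simp: dist_commute)
    ultimately have inT: "\<phi> x' \<in> T" "\<phi> x \<in> T" unfolding T_def by auto
    have small: "B * dist (\<phi> x') (\<phi> x) < \<eta>"
    proof -
      have "B * dist (\<phi> x') (\<phi> x) \<le> (B + 1) * dist (\<phi> x') (\<phi> x)" by (simp add: distrib_right)
      also have "\<dots> < (B + 1) * (\<eta> / (B + 1))"
        using dphi B(1) unfolding \<eta>'_def by (intro mult_strict_left_mono) auto
      also have "\<dots> = \<eta>" using B(1) by simp
      finally show ?thesis .
    qed
    have "geodesic_dist M (\<psi> (\<phi> x)) (\<psi> (\<phi> x')) \<le> ereal (B * norm (\<phi> x' - \<phi> x))"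
      by (rule seg_geodesic[OF convT inT(2) inT(1) TM lipT B(1)])
    moreover have "geodesic_dist M (\<psi> (\<phi> x')) (\<psi> (\<phi> x)) \<le> ereal (B * norm (\<phi> x - \<phi> x'))"
      by (rule seg_geodesic[OF convT inT(1) inT(2) TM lipT B(1)])
    moreover have "\<psi> (\<phi> x) = x" "\<psi> (\<phi> x') = x'" using psiphi U(2) x'U by auto
    ultimately have "geodesic_dist M x x' \<le> ereal (B * dist (\<phi> x') (\<phi> x))"
      "geodesic_dist M x' x \<le> ereal (B * dist (\<phi> x') (\<phi> x))"
      by (auto simp: dist_norm norm_minus_commute)
    then show "geodesic_dist M x x' < ereal \<eta>" "geodesic_dist M x' x < ereal \<eta>"
      using small by (auto intro: le_less_trans)
  qed
qed

lemma geo_open: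
  fixes M :: "'a::euclidean_space set"
  assumes sm: "submanifold M"
  shows "openin (top_of_set (M \<times> M)) {p \<in> M \<times> M. geodesic_dist M (fst p) (snd p) < ereal r}"
  unfolding openin_euclidean_subtopology_iff
proof (intro conjI ballI)
  show "{p \<in> M \<times> M. geodesic_dist M (fst p) (snd p) < ereal r} \<subseteq> M \<times> M" by blast
  fix p assume p: "p \<in> {p \<in> M \<times> M. geodesic_dist M (fst p) (snd p) < ereal r}"
  obtain x z where pxz: "p = (x, z)" by (cases p)
  have xM: "x \<in> M" and zM: "z \<in> M" and dlt: "geodesic_dist M x z < ereal r" using p pxz by auto
  obtain d0 where d0: "geodesic_dist M x z = ereal d0"
    using dlt geodesic_dist_nonneg[of M x z] by (cases "geodesic_dist M x z") auto
  have d0r: "d0 < r" using dlt d0 by simp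
  define \<eta> where "\<eta> = (r - d0) / 2"
  have eta: "\<eta> > 0" using d0r by (simp add: \<eta>_def)
  obtain ex where ex: "ex > 0" "\<forall>x'\<in>M. dist x' x < ex \<longrightarrow> geodesic_dist M x x' < ereal \<eta> \<and> geodesic_dist M x' x < ereal \<eta>"
    using chart_local[OF sm xM eta] by blast
  obtain ez where ez: "ez > 0" "\<forall>x'\<in>M. dist x' z < ez \<longrightarrow> geodesic_dist M z x' < ereal \<eta> \<and> geodesic_dist M x' z < ereal \<eta>"
    using chart_local[OF sm zM eta] by blast
  show "\<exists>e>0. \<forall>q\<in>M \<times> M. dist q p < e \<longrightarrow> q \<in> {p \<in> M \<times> M. geodesic_dist M (fst p) (snd p) < ereal r}"
  proof (intro exI[of _ "min ex ez"] conjI ballI impI)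
    show "min ex ez > 0" using ex ez by simp
    fix q assume qM: "q \<in> M \<times> M" and dq: "dist q p < min ex ez"
    obtain x' z' where qxz: "q = (x', z')" by (cases q)
    have x'M: "x' \<in> M" and z'M: "z' \<in> M" using qM qxz by auto
    have "dist x' x \<le> dist q p" "dist z' z \<le> dist q p"
      using dist_fst_le[of q p] dist_snd_le[of q p] qxz pxz by auto
    hence "dist x' x < ex" "dist z' z < ez" using dq by auto
    hence a: "geodesic_dist M x' x < ereal \<eta>" and b: "geodesic_dist M z z' < ereal \<eta>"
      using ex(2) ez(2) x'M z'M by auto
    have "geodesic_dist M x' z' \<le> geodesic_dist M x' x + geodesic_dist M x z'"
      by (rule geodesic_dist_triangle)
    also have "geodesic_dist M x z' \<le> geodesic_dist M x z + geodesic_dist M z z'"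
      by (rule geodesic_dist_triangle)
    hence "geodesic_dist M x' x + geodesic_dist M x z' \<le> geodesic_dist M x' x + (ereal d0 + geodesic_dist M z z')"
      unfolding d0 by (rule add_left_mono)
    also have "\<dots> < ereal r"
    proof -
      obtain a0 where a0: "geodesic_dist M x' x = ereal a0"
        using a geodesic_dist_nonneg[of M x' x] by (cases "geodesic_dist M x' x") auto
      obtain b0 where b0: "geodesic_dist M z z' = ereal b0"
        using b geodesic_dist_nonneg[of M z z'] by (cases "geodesic_dist M z z'") auto
      have "a0 < \<eta>" "b0 < \<eta>" using a b a0 b0 by auto
      then show ?thesis unfolding a0 b0 using d0r by (simp add: \<eta>_def)
    qed
    finally show "q \<in> {p \<in> M \<times> M. geodesic_dist M (fst p) (snd p) < ereal r}"
      using qM qxz by simp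
  qed
qed

lemma geo_sets:
  fixes M :: "'a::euclidean_space set" and \<mu> :: "'a measure"
  assumes sm: "submanifold M" and sp: "space \<mu> = M" and st: "sets \<mu> = sets (restrict_space borel M)"
  shows "{p \<in> M \<times> M. geodesic_dist M (fst p) (snd p) < ereal r} \<in> sets (\<mu> \<Otimes>\<^sub>M \<mu>)"
proof -
  obtain T where T: "open T" "{p \<in> M \<times> M. geodesic_dist M (fst p) (snd p) < ereal r} = (M \<times> M) \<inter> T"
    using geo_open[OF sm, of r] unfolding openin_open by blast
  have mb: "(\<lambda>x. x) \<in> measurable \<mu> borel"
  proof -
    have "(\<lambda>x. x) \<in> measurable (restrict_space borel M) borel"
      by (intro measurable_restrict_space1) simp
    then show ?thesis by (subst measurable_cong_sets[OF st refl])
  qed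
  have "(\<lambda>p. (fst p, snd p)) \<in> measurable (\<mu> \<Otimes>\<^sub>M \<mu>) (borel \<Otimes>\<^sub>M borel)"
    by (intro measurable_Pair measurable_compose[OF measurable_fst mb] measurable_compose[OF measurable_snd mb])
  hence "(\<lambda>p. p) \<in> measurable (\<mu> \<Otimes>\<^sub>M \<mu>) borel" by (simp add: borel_prod)
  hence "(\<lambda>p. p) -` T \<inter> space (\<mu> \<Otimes>\<^sub>M \<mu>) \<in> sets (\<mu> \<Otimes>\<^sub>M \<mu>)"
    using T(1) by (intro measurable_sets) auto
  moreover have "(\<lambda>p. p) -` T \<inter> space (\<mu> \<Otimes>\<^sub>M \<mu>) = (M \<times> M) \<inter> T"
    by (auto simp: space_pair_measure sp)
  ultimately show ?thesis using T(2) by simp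
qed

lemma ball_sets:
  fixes M :: "'a::euclidean_space set" and \<mu> :: "'a measure"
  assumes sm: "submanifold M" and sp: "space \<mu> = M" and st: "sets \<mu> = sets (restrict_space borel M)"
    and xM: "x \<in> M"
  shows "geodesic_ball M x r \<in> sets \<mu>"
proof -
  have "Pair x -` {p \<in> M \<times> M. geodesic_dist M (fst p) (snd p) < ereal r} \<in> sets \<mu>"
    by (rule sets_Pair1[OF geo_sets[OF sm sp st]])
  moreover have "Pair x -` {p \<in> M \<times> M. geodesic_dist M (fst p) (snd p) < ereal r} = geodesic_ball M x r"
    using xM by (auto simp: geodesic_ball_def)
  ultimately show ?thesis by simp
qed



lemma q_nonneg:
  fixes p s :: real
  assumes "0 \<le> p" "p \<le> 1"
  shows "0 \<le> 1 - p + p * exp s"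
proof -
  have "0 \<le> p * exp s" using mult_nonneg_nonneg[OF assms(1) exp_ge_zero[of s]] .
  then show ?thesis using assms by linarith
qed

lemma card_sum_ind:
  assumes J: "finite J"
  shows "real (card {j\<in>J. X j \<omega> \<in> C}) = (\<Sum>j\<in>J. indicator C (X j \<omega>))"
proof -
  have "(\<Sum>j\<in>J. indicator C (X j \<omega>) :: real) = (\<Sum>j\<in>J. if X j \<omega> \<in> C then 1 else 0)"
    by (rule sum.cong) (auto simp: indicator_def)
  also have "\<dots> = (\<Sum>j\<in>{j\<in>J. X j \<omega> \<in> C}. 1)" by (rule sum.inter_filter[OF J, symmetric])
  also have "\<dots> = real (card {j\<in>J. X j \<omega> \<in> C})" by simp
  finally show ?thesis by simp
qed

lemma (in prob_space) mgf_card: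
  fixes X :: "'i \<Rightarrow> 'a \<Rightarrow> 'b" and N :: "'b measure"
  assumes J: "finite J" and ind: "indep_vars (\<lambda>_. N) X J"
    and rv: "\<And>j. j \<in> J \<Longrightarrow> X j \<in> measurable M N"
    and dist: "\<And>j. j \<in> J \<Longrightarrow> distr M N (X j) = N"
    and pN: "prob_space N" and C: "C \<in> sets N"
  shows "(\<integral>\<^sup>+\<omega>. ennreal (exp (s * real (card {j\<in>J. X j \<omega> \<in> C}))) * indicator (space M) \<omega> \<partial>M)
       = ennreal ((1 - measure N C + measure N C * exp s) ^ card J)"
proof -
  define q where "q = 1 - measure N C + measure N C * exp s"
  have pC: "measure N C \<le> 1" "measure N C \<ge> 0" using prob_space.prob_le_1[OF pN] by auto
  have q0: "q \<ge> 0" unfolding q_def using pC by (intro q_nonneg) auto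
  have Ymeas[measurable]: "(\<lambda>z. ennreal (exp (s * indicator C z))) \<in> borel_measurable N"
    using C by measurable
  have "(\<integral>\<^sup>+\<omega>. ennreal (exp (s * real (card {j\<in>J. X j \<omega> \<in> C}))) * indicator (space M) \<omega> \<partial>M)
      = (\<integral>\<^sup>+\<omega>. (\<Prod>j\<in>J. ennreal (exp (s * indicator C (X j \<omega>)))) \<partial>M)"
  proof (rule nn_integral_cong)
    fix \<omega> assume "\<omega> \<in> space M"
    have "real (card {j\<in>J. X j \<omega> \<in> C}) = (\<Sum>j\<in>J. indicator C (X j \<omega>))"
      by (rule card_sum_ind[OF J])
    hence "exp (s * real (card {j\<in>J. X j \<omega> \<in> C})) = (\<Prod>j\<in>J. exp (s * indicator C (X j \<omega>)))"
      by (simp only: sum_distrib_left exp_sum[OF J])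
    then show "ennreal (exp (s * real (card {j\<in>J. X j \<omega> \<in> C}))) * indicator (space M) \<omega>
        = (\<Prod>j\<in>J. ennreal (exp (s * indicator C (X j \<omega>))))"
      using \<open>\<omega> \<in> space M\<close> by (simp add: prod_ennreal)
  qed
  also have "\<dots> = (\<Prod>j\<in>J. \<integral>\<^sup>+\<omega>. ennreal (exp (s * indicator C (X j \<omega>))) \<partial>M)"
    by (intro indep_vars_nn_integral J indep_vars_compose2[OF ind] Ymeas) auto
  also have "\<dots> = (\<Prod>j\<in>J. ennreal q)"
  proof (rule prod.cong[OF refl])
    fix j assume j: "j \<in> J"
    have "(\<integral>\<^sup>+z. ennreal (exp (s * indicator C z)) \<partial>distr M N (X j))
        = (\<integral>\<^sup>+\<omega>. ennreal (exp (s * indicator C (X j \<omega>))) \<partial>M)"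
      by (rule nn_integral_distr[OF rv[OF j]]) (simp add: Ymeas)
    hence "(\<integral>\<^sup>+\<omega>. ennreal (exp (s * indicator C (X j \<omega>))) \<partial>M)
        = (\<integral>\<^sup>+z. ennreal (exp (s * indicator C z)) \<partial>distr M N (X j))" by simp
    also have "\<dots> = (\<integral>\<^sup>+z. ennreal (exp (s * indicator C z)) \<partial>N)" using dist[OF j] by simp
    also have "\<dots> = (\<integral>\<^sup>+z. ennreal (exp s) * indicator C z + indicator (space N - C) z \<partial>N)"
    proof (rule nn_integral_cong)
      fix z assume "z \<in> space N"
      then show "ennreal (exp (s * indicator C z)) = ennreal (exp s) * indicator C z + indicator (space N - C) z"
        by (cases "z \<in> C") auto
    qed
    also have "\<dots> = ennreal (exp s) * emeasure N C + emeasure N (space N - C)"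
      using C by (subst nn_integral_add) (auto simp: nn_integral_cmult_indicator)
    also have "\<dots> = ennreal q"
      using C pC unfolding q_def
      by (simp add: finite_measure.emeasure_eq_measure[OF prob_space.finite_measure[OF pN]] prob_space.prob_compl[OF pN]
          ennreal_mult[symmetric] ennreal_plus[symmetric] del: ennreal_plus)
    finally show "(\<integral>\<^sup>+\<omega>. ennreal (exp (s * indicator C (X j \<omega>))) \<partial>M) = ennreal q" .
  qed
  also have "\<dots> = ennreal (q ^ card J)" using q0 by (simp add: prod_ennreal ennreal_power)
  finally show ?thesis unfolding q_def .
qed

lemma q_bound:
  assumes "0 \<le> p" "p \<le> 1"
  shows "(1 - p + p * exp s) ^ m \<le> exp (real m * p * (exp s - 1))"
proof -
  have "0 \<le> 1 - p + p * exp s" using assms by (rule q_nonneg)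
  moreover have "1 - p + p * exp s \<le> exp (p * (exp s - 1))"
    using exp_ge_add_one_self[of "p * (exp s - 1)"] by (simp add: algebra_simps)
  ultimately have "(1 - p + p * exp s) ^ m \<le> exp (p * (exp s - 1)) ^ m" by (intro power_mono)
  also have "\<dots> = exp (real m * p * (exp s - 1))" by (simp add: exp_of_nat_mult[symmetric] mult.assoc)
  finally show ?thesis .
qed

lemma (in prob_space) chernoff_card_ge:
  fixes X :: "'i \<Rightarrow> 'a \<Rightarrow> 'b" and N :: "'b measure"
  assumes J: "finite J" and ind: "indep_vars (\<lambda>_. N) X J"
    and rv: "\<And>j. j \<in> J \<Longrightarrow> X j \<in> measurable M N"
    and dist: "\<And>j. j \<in> J \<Longrightarrow> distr M N (X j) = N"
    and pN: "prob_space N" and C: "C \<in> sets N" and s: "s > 0"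
  shows "prob {\<omega>\<in>space M. real (card {j\<in>J. X j \<omega> \<in> C}) \<ge> a}
     \<le> exp (- s * a + real (card J) * measure N C * (exp s - 1))"
proof -
  have meas0: "(\<lambda>\<omega>. real (card {j\<in>J. X j \<omega> \<in> C})) \<in> borel_measurable M"
  proof -
    have "(\<lambda>\<omega>. (\<Sum>j\<in>J. indicator C (X j \<omega>) :: real)) \<in> borel_measurable M"
    proof (intro borel_measurable_sum)
      fix j assume j: "j \<in> J"
      show "(\<lambda>\<omega>. indicator C (X j \<omega>) :: real) \<in> borel_measurable M"
        by (rule measurable_compose[OF rv[OF j]]) (rule borel_measurable_indicator[OF C])
    qed
    moreover have "\<And>\<omega>. real (card {j\<in>J. X j \<omega> \<in> C}) = (\<Sum>j\<in>J. indicator C (X j \<omega>))"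
      by (rule card_sum_ind[OF J])
    ultimately show ?thesis by (simp only: card_sum_ind[OF J])
  qed
  have meas[measurable]: "(\<lambda>\<omega>. real (card {j\<in>J. X j \<omega> \<in> C}) * indicator (space M) \<omega>) \<in> borel_measurable M"
    by (intro borel_measurable_times meas0 borel_measurable_indicator sets.top)
  have "emeasure M {\<omega>\<in>space M. real (card {j\<in>J. X j \<omega> \<in> C}) \<ge> a}
      \<le> ennreal (exp (- s * a)) * (\<integral>\<^sup>+\<omega>. ennreal (exp (s * real (card {j\<in>J. X j \<omega> \<in> C}))) * indicator (space M) \<omega> \<partial>M)"
    by (rule Chernoff_ineq_nn_integral_ge[OF s]) (auto simp: meas)
  also have "\<dots> = ennreal (exp (- s * a)) * ennreal ((1 - measure N C + measure N C * exp s) ^ card J)"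
    by (simp only: mgf_card[OF J ind rv dist pN C])
  also have "\<dots> = ennreal (exp (- s * a) * (1 - measure N C + measure N C * exp s) ^ card J)"
    using prob_space.prob_le_1[OF pN, of C] measure_nonneg[of N C]
    by (intro ennreal_mult[symmetric]) (auto intro!: q_nonneg)
  finally have "prob {\<omega>\<in>space M. real (card {j\<in>J. X j \<omega> \<in> C}) \<ge> a}
      \<le> exp (- s * a) * (1 - measure N C + measure N C * exp s) ^ card J"
    using mult_nonneg_nonneg[OF exp_ge_zero[of "- s * a"] zero_le_power[OF q_nonneg[OF measure_nonneg prob_space.prob_le_1[OF pN]], of C s "card J"]]
    by (simp add: emeasure_eq_measure)
  also have "\<dots> \<le> exp (- s * a) * exp (real (card J) * measure N C * (exp s - 1))"
    using prob_space.prob_le_1[OF pN] by (intro mult_left_mono q_bound) auto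
  also have "\<dots> = exp (- s * a + real (card J) * measure N C * (exp s - 1))" by (rule exp_add[symmetric])
  finally show ?thesis .
qed

lemma (in prob_space) chernoff_card_le:
  fixes X :: "'i \<Rightarrow> 'a \<Rightarrow> 'b" and N :: "'b measure"
  assumes J: "finite J" and ind: "indep_vars (\<lambda>_. N) X J"
    and rv: "\<And>j. j \<in> J \<Longrightarrow> X j \<in> measurable M N"
    and dist: "\<And>j. j \<in> J \<Longrightarrow> distr M N (X j) = N"
    and pN: "prob_space N" and C: "C \<in> sets N" and s: "s > 0"
  shows "prob {\<omega>\<in>space M. real (card {j\<in>J. X j \<omega> \<in> C}) \<le> a}
     \<le> exp (s * a + real (card J) * measure N C * (exp (- s) - 1))"
proof -
  have meas[measurable]: "(\<lambda>\<omega>. real (card {j\<in>J. X j \<omega> \<in> C})) \<in> borel_measurable M"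
  proof -
    have "(\<lambda>\<omega>. (\<Sum>j\<in>J. indicator C (X j \<omega>) :: real)) \<in> borel_measurable M"
    proof (intro borel_measurable_sum)
      fix j assume j: "j \<in> J"
      show "(\<lambda>\<omega>. indicator C (X j \<omega>) :: real) \<in> borel_measurable M"
        by (rule measurable_compose[OF rv[OF j]]) (rule borel_measurable_indicator[OF C])
    qed
    moreover have "\<And>\<omega>. real (card {j\<in>J. X j \<omega> \<in> C}) = (\<Sum>j\<in>J. indicator C (X j \<omega>))"
      by (rule card_sum_ind[OF J])
    ultimately show ?thesis by (simp only: card_sum_ind[OF J])
  qed
  have "emeasure M {\<omega>\<in>space M. real (card {j\<in>J. X j \<omega> \<in> C}) \<le> a}
      \<le> ennreal (exp (s * a)) * (\<integral>\<^sup>+\<omega>. ennreal (exp (- s * real (card {j\<in>J. X j \<omega> \<in> C}))) * indicator (space M) \<omega> \<partial>M)"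
    by (rule Chernoff_ineq_nn_integral_le[OF s]) (auto simp: meas)
  also have "\<dots> = ennreal (exp (s * a)) * ennreal ((1 - measure N C + measure N C * exp (- s)) ^ card J)"
    by (simp only: mgf_card[OF J ind rv dist pN C])
  also have "\<dots> = ennreal (exp (s * a) * (1 - measure N C + measure N C * exp (- s)) ^ card J)"
    using prob_space.prob_le_1[OF pN, of C] measure_nonneg[of N C]
    by (intro ennreal_mult[symmetric]) (auto intro!: q_nonneg)
  finally have "prob {\<omega>\<in>space M. real (card {j\<in>J. X j \<omega> \<in> C}) \<le> a}
      \<le> exp (s * a) * (1 - measure N C + measure N C * exp (- s)) ^ card J"
    using mult_nonneg_nonneg[OF exp_ge_zero[of "s * a"] zero_le_power[OF q_nonneg[OF measure_nonneg prob_space.prob_le_1[OF pN]], of C "- s" "card J"]]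
    by (simp add: emeasure_eq_measure)
  also have "\<dots> \<le> exp (s * a) * exp (real (card J) * measure N C * (exp (- s) - 1))"
    using prob_space.prob_le_1[OF pN] by (intro mult_left_mono q_bound) auto
  also have "\<dots> = exp (s * a + real (card J) * measure N C * (exp (- s) - 1))" by (rule exp_add[symmetric])
  finally show ?thesis .
qed

lemma ln_ge_one_minus_inv:
  fixes x :: real assumes "x > 0" shows "ln x \<ge> 1 - 1 / x"
proof -
  have "ln (1 / x) \<le> 1 / x - 1" using assms by (intro ln_le_minus_one) auto
  then show ?thesis using assms by (simp add: ln_div)
qed

lemma kl_up:
  fixes p t :: real assumes p: "p > 0" and t: "t > 0"
  shows "- ln ((sqrt p + t)^2 / p) * (sqrt p + t)^2 + ((sqrt p + t)^2 - p) \<le> - (t^2)"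
proof -
  define u where "u = sqrt p + t"
  define v where "v = sqrt p"
  have v: "v > 0" "v^2 = p" unfolding v_def using p by auto
  have sp: "sqrt p > 0" using p by simp
  have u: "u > 0" "u > v" unfolding u_def v_def using add_pos_pos[OF sp t] t by auto
  have "(u^2 / p) = (u / v)^2" using v by (simp add: power_divide)
  hence "ln (u^2 / p) = 2 * ln (u / v)" using u v by (simp add: ln_realpow)
  also have "ln (u / v) \<ge> 1 - v / u" using ln_ge_one_minus_inv[of "u/v"] u v by simp
  hence "2 * ln (u / v) \<ge> 2 * (1 - v / u)" by simp
  finally have "ln (u^2 / p) * u^2 \<ge> 2 * (1 - v / u) * u^2" by (intro mult_right_mono) auto
  also have "2 * (1 - v / u) * u^2 = 2 * u^2 - 2 * u * v" using u by (simp add: field_simps power2_eq_square)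
  finally have key: "ln (u^2 / p) * u^2 \<ge> 2 * u^2 - 2 * u * v" .
  have tuv: "t = u - v" unfolding u_def v_def by simp
  have t2: "t^2 = u^2 - 2 * u * v + p"
  proof -
    have "t^2 = (u - v)^2" using tuv by simp
    also have "\<dots> = u^2 - 2 * u * v + v^2" by (simp add: power2_eq_square algebra_simps)
    finally show ?thesis using v(2) by simp
  qed
  show ?thesis unfolding u_def[symmetric] using key t2 by linarith
qed

lemma kl_lo:
  fixes p t :: real assumes p: "p > 0" and t: "t > 0" and pt: "sqrt p > t"
  shows "ln (p / (sqrt p - t)^2) * (sqrt p - t)^2 + ((sqrt p - t)^2 - p) \<le> - (t^2)"
proof -
  define u where "u = sqrt p - t"
  define v where "v = sqrt p"
  have v: "v > 0" "v^2 = p" unfolding v_def using p by auto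
  have u: "u > 0" "u < v" unfolding u_def v_def using pt t by auto
  have "(p / u^2) = (v / u)^2" using v by (simp add: power_divide)
  hence "ln (p / u^2) = 2 * ln (v / u)" using u v by (simp add: ln_realpow)
  also have "ln (v / u) \<le> v / u - 1" using u v by (intro ln_le_minus_one) auto
  hence "2 * ln (v / u) \<le> 2 * (v / u - 1)" by simp
  finally have "ln (p / u^2) * u^2 \<le> 2 * (v / u - 1) * u^2" by (intro mult_right_mono) auto
  also have "2 * (v / u - 1) * u^2 = 2 * u * v - 2 * u^2" using u by (simp add: field_simps power2_eq_square)
  finally have key: "ln (p / u^2) * u^2 \<le> 2 * u * v - 2 * u^2" .
  have tuv: "t = v - u" unfolding u_def v_def by simp
  have t2: "t^2 = p - 2 * u * v + u^2"
  proof -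
    have "t^2 = (v - u)^2" using tuv by simp
    also have "\<dots> = v^2 - 2 * u * v + u^2" by (simp add: power2_eq_square algebra_simps)
    finally show ?thesis using v(2) by simp
  qed
  show ?thesis unfolding u_def[symmetric] using key t2 by linarith
qed

lemma (in prob_space) card_measurable:
  fixes X :: "'i \<Rightarrow> 'a \<Rightarrow> 'b" and N :: "'b measure"
  assumes J: "finite J" and rv: "\<And>j. j \<in> J \<Longrightarrow> X j \<in> measurable M N" and C: "C \<in> sets N"
  shows "(\<lambda>\<omega>. real (card {j\<in>J. X j \<omega> \<in> C})) \<in> borel_measurable M"
proof -
  have "(\<lambda>\<omega>. (\<Sum>j\<in>J. indicator C (X j \<omega>) :: real)) \<in> borel_measurable M"
  proof (intro borel_measurable_sum)
    fix j assume j: "j \<in> J"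
    show "(\<lambda>\<omega>. indicator C (X j \<omega>) :: real) \<in> borel_measurable M"
      by (rule measurable_compose[OF rv[OF j]]) (rule borel_measurable_indicator[OF C])
  qed
  then show ?thesis by (simp only: card_sum_ind[OF J])
qed

lemma (in prob_space) sqrt_upper:
  fixes X :: "'i \<Rightarrow> 'a \<Rightarrow> 'b" and N :: "'b measure"
  assumes J: "finite J" and ind: "indep_vars (\<lambda>_. N) X J"
    and rv: "\<And>j. j \<in> J \<Longrightarrow> X j \<in> measurable M N"
    and dist: "\<And>j. j \<in> J \<Longrightarrow> distr M N (X j) = N"
    and pN: "prob_space N" and C: "C \<in> sets N" and t: "t > 0" and m: "card J > 0"
  shows "prob {\<omega>\<in>space M. sqrt (real (card {j\<in>J. X j \<omega> \<in> C}) / real (card J)) > sqrt (measure N C) + t}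
     \<le> exp (- real (card J) * t^2)"
proof -
  define m where "m = real (card J)"
  define p where "p = measure N C"
  define \<alpha> where "\<alpha> = (sqrt p + t)^2"
  have m0: "m > 0" using m unfolding m_def by simp
  have p0: "p \<ge> 0" unfolding p_def by simp
  have sub: "{\<omega>\<in>space M. sqrt (real (card {j\<in>J. X j \<omega> \<in> C}) / real (card J)) > sqrt (measure N C) + t}
      \<subseteq> {\<omega>\<in>space M. real (card {j\<in>J. X j \<omega> \<in> C}) \<ge> m * \<alpha>}"
  proof safe
    fix \<omega> assume "\<omega> \<in> space M" and h: "sqrt (real (card {j\<in>J. X j \<omega> \<in> C}) / real (card J)) > sqrt (measure N C) + t"
    have "0 \<le> sqrt p + t" using t p0 by simp
    hence "(sqrt p + t)^2 \<le> (sqrt (real (card {j\<in>J. X j \<omega> \<in> C}) / m))^2"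
      using h unfolding p_def m_def by (intro power_mono) auto
    hence "\<alpha> \<le> real (card {j\<in>J. X j \<omega> \<in> C}) / m" unfolding \<alpha>_def using m0 by simp
    then show "m * \<alpha> \<le> real (card {j\<in>J. X j \<omega> \<in> C})" using m0 by (simp add: field_simps)
  qed
  have meas: "{\<omega>\<in>space M. real (card {j\<in>J. X j \<omega> \<in> C}) \<ge> m * \<alpha>} \<in> events"
    using card_measurable[OF J rv C] by measurable
  have "prob {\<omega>\<in>space M. sqrt (real (card {j\<in>J. X j \<omega> \<in> C}) / real (card J)) > sqrt (measure N C) + t}
      \<le> prob {\<omega>\<in>space M. real (card {j\<in>J. X j \<omega> \<in> C}) \<ge> m * \<alpha>}"
    by (rule finite_measure_mono[OF sub meas])
  also have "\<dots> \<le> exp (- m * t^2)"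
  proof (cases "p = 0")
    case True
    have "prob {\<omega>\<in>space M. real (card {j\<in>J. X j \<omega> \<in> C}) \<ge> m * \<alpha>} \<le> exp (- 1 * (m * \<alpha>) + m * p * (exp 1 - 1))"
      using chernoff_card_ge[OF J ind rv dist pN C, of 1 "m * \<alpha>"] unfolding m_def p_def by simp
    also have "\<dots> = exp (- m * t^2)" using True unfolding \<alpha>_def by simp
    finally show ?thesis .
  next
    case False
    hence p: "p > 0" using p0 by simp
    have "\<alpha> > p"
    proof -
      have "sqrt p + t > sqrt p" using t by simp
      hence "(sqrt p + t)^2 > (sqrt p)^2" using p by (intro power_strict_mono) auto
      then show ?thesis unfolding \<alpha>_def using p0 by simp
    qed
    define s where "s = ln (\<alpha> / p)"
    have s: "s > 0" unfolding s_def using \<open>\<alpha> > p\<close> p by simp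
    have es: "exp s = \<alpha> / p" unfolding s_def using \<open>\<alpha> > p\<close> p by simp
    have "prob {\<omega>\<in>space M. real (card {j\<in>J. X j \<omega> \<in> C}) \<ge> m * \<alpha>} \<le> exp (- s * (m * \<alpha>) + m * p * (exp s - 1))"
      using chernoff_card_ge[OF J ind rv dist pN C s, of "m * \<alpha>"] unfolding m_def p_def by simp
    also have "- s * (m * \<alpha>) + m * p * (exp s - 1) = m * (- ln (\<alpha> / p) * \<alpha> + (\<alpha> - p))"
      unfolding es using p by (simp add: s_def field_simps)
    also have "\<dots> \<le> m * (- (t^2))" using kl_up[OF p t] m0 unfolding \<alpha>_def by (intro mult_left_mono) auto
    finally show ?thesis by simp
  qed
  finally show ?thesis unfolding m_def .
qed

lemma (in prob_space) sqrt_lower: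
  fixes X :: "'i \<Rightarrow> 'a \<Rightarrow> 'b" and N :: "'b measure"
  assumes J: "finite J" and ind: "indep_vars (\<lambda>_. N) X J"
    and rv: "\<And>j. j \<in> J \<Longrightarrow> X j \<in> measurable M N"
    and dist: "\<And>j. j \<in> J \<Longrightarrow> distr M N (X j) = N"
    and pN: "prob_space N" and C: "C \<in> sets N" and t: "t > 0" and m: "card J > 0"
  shows "prob {\<omega>\<in>space M. sqrt (real (card {j\<in>J. X j \<omega> \<in> C}) / real (card J)) < sqrt (measure N C) - t}
     \<le> exp (- real (card J) * t^2)"
proof (cases "sqrt (measure N C) > t")
  case False
  have e: "{\<omega>\<in>space M. sqrt (real (card {j\<in>J. X j \<omega> \<in> C}) / real (card J)) < sqrt (measure N C) - t} = {}"
  proof -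
    { fix \<omega>
      have "0 \<le> sqrt (real (card {j\<in>J. X j \<omega> \<in> C}) / real (card J))" by simp
      hence "\<not> sqrt (real (card {j\<in>J. X j \<omega> \<in> C}) / real (card J)) < sqrt (measure N C) - t"
        using False by linarith }
    then show ?thesis by blast
  qed
  show ?thesis unfolding e by simp
next
  case True
  define m where "m = real (card J)"
  define p where "p = measure N C"
  define \<alpha> where "\<alpha> = (sqrt p - t)^2"
  have m0: "m > 0" using m unfolding m_def by simp
  have pt: "sqrt p > t" using True unfolding p_def .
  have p: "p > 0" using pt t by (smt (verit) real_sqrt_le_0_iff p_def measure_nonneg)
  have sub: "{\<omega>\<in>space M. sqrt (real (card {j\<in>J. X j \<omega> \<in> C}) / real (card J)) < sqrt (measure N C) - t}
      \<subseteq> {\<omega>\<in>space M. real (card {j\<in>J. X j \<omega> \<in> C}) \<le> m * \<alpha>}"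
  proof safe
    fix \<omega> assume "\<omega> \<in> space M" and h: "sqrt (real (card {j\<in>J. X j \<omega> \<in> C}) / real (card J)) < sqrt (measure N C) - t"
    have "(sqrt (real (card {j\<in>J. X j \<omega> \<in> C}) / m))^2 \<le> (sqrt p - t)^2"
      using h unfolding p_def m_def by (intro power_mono) auto
    hence "real (card {j\<in>J. X j \<omega> \<in> C}) / m \<le> \<alpha>" unfolding \<alpha>_def using m0 by simp
    then show "real (card {j\<in>J. X j \<omega> \<in> C}) \<le> m * \<alpha>" using m0 by (simp add: field_simps)
  qed
  have meas: "{\<omega>\<in>space M. real (card {j\<in>J. X j \<omega> \<in> C}) \<le> m * \<alpha>} \<in> events"
    using card_measurable[OF J rv C] by measurable
  have "prob {\<omega>\<in>space M. sqrt (real (card {j\<in>J. X j \<omega> \<in> C}) / real (card J)) < sqrt (measure N C) - t}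
      \<le> prob {\<omega>\<in>space M. real (card {j\<in>J. X j \<omega> \<in> C}) \<le> m * \<alpha>}"
    by (rule finite_measure_mono[OF sub meas])
  also have "\<dots> \<le> exp (- m * t^2)"
  proof -
    have a0: "\<alpha> > 0" unfolding \<alpha>_def using pt by simp
    have "\<alpha> < p"
    proof -
      have "sqrt p - t < sqrt p" "0 \<le> sqrt p - t" using t pt by auto
      hence "(sqrt p - t)^2 < (sqrt p)^2" by (intro power_strict_mono) auto
      then show ?thesis unfolding \<alpha>_def using p by simp
    qed
    define s where "s = ln (p / \<alpha>)"
    have s: "s > 0" unfolding s_def using \<open>\<alpha> < p\<close> a0 by simp
    have es: "exp (- s) = \<alpha> / p" unfolding s_def using \<open>\<alpha> < p\<close> a0 p by (simp add: exp_minus)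
    have "prob {\<omega>\<in>space M. real (card {j\<in>J. X j \<omega> \<in> C}) \<le> m * \<alpha>} \<le> exp (s * (m * \<alpha>) + m * p * (exp (- s) - 1))"
      using chernoff_card_le[OF J ind rv dist pN C s, of "m * \<alpha>"] unfolding m_def p_def by simp
    also have "s * (m * \<alpha>) + m * p * (exp (- s) - 1) = m * (ln (p / \<alpha>) * \<alpha> + (\<alpha> - p))"
      unfolding es using p by (simp add: s_def field_simps)
    also have "\<dots> \<le> m * (- (t^2))" using kl_lo[OF p t pt] m0 unfolding \<alpha>_def by (intro mult_left_mono) auto
    finally show ?thesis by simp
  qed
  finally show ?thesis unfolding m_def .
qed



lemma measure_UN_mono_le:
  fixes B :: "real \<Rightarrow> 'b set" and N :: "'b measure"
  assumes fN: "finite_measure N" and I: "countable I"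
    and mono: "\<And>r r'. r \<le> r' \<Longrightarrow> B r \<subseteq> B r'"
    and Bs: "\<And>s. s \<in> I \<Longrightarrow> B s \<in> sets N" and Bc: "\<And>s. s \<in> I \<Longrightarrow> measure N (B s) \<le> c"
    and c: "c \<ge> 0"
  shows "measure N (\<Union>s\<in>I. B s) \<le> c"
proof (cases "I = {}")
  case True
  then show ?thesis using c by simp
next
  case False
  define f where "f = from_nat_into I"
  define A where "A k = B (Max (f ` {..k}))" for k
  have fI: "f j \<in> I" for j unfolding f_def using from_nat_into[OF False] .
  have MaxI: "Max (f ` {..k}) \<in> I" for k
  proof -
    have "Max (f ` {..k}) \<in> f ` {..k}" by (rule Max_in) auto
    then obtain j where "Max (f ` {..k}) = f j" by blast
    then show ?thesis using fI[of j] by simp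
  qed
  have inc: "incseq A" unfolding A_def
    by (intro monoI mono Max_mono) auto
  have UA: "(\<Union>k. A k) = (\<Union>s\<in>I. B s)"
  proof
    show "(\<Union>k. A k) \<subseteq> (\<Union>s\<in>I. B s)" unfolding A_def using MaxI by blast
    show "(\<Union>s\<in>I. B s) \<subseteq> (\<Union>k. A k)"
    proof
      fix z assume "z \<in> (\<Union>s\<in>I. B s)"
      then obtain s where s: "s \<in> I" "z \<in> B s" by blast
      have "s \<in> range f" unfolding f_def using range_from_nat_into[OF False I] s by simp
      then obtain j where j: "s = f j" by blast
      have "s \<le> Max (f ` {..j})" using j by (intro Max_ge) auto
      hence "B s \<subseteq> A j" unfolding A_def by (rule mono)
      then show "z \<in> (\<Union>k. A k)" using s by blast
    qed
  qed
  have "(\<lambda>k. measure N (A k)) \<longlonglongrightarrow> measure N (\<Union>k. A k)"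
  proof -
    have rA: "range A \<subseteq> sets N" unfolding A_def using MaxI Bs by auto
    show ?thesis by (rule finite_measure.finite_Lim_measure_incseq[OF fN rA inc])
  qed
  moreover have "measure N (A k) \<le> c" for k unfolding A_def using Bc MaxI by blast
  ultimately have "measure N (\<Union>k. A k) \<le> c" by (intro LIMSEQ_le_const2) auto
  then show ?thesis using UA by simp
qed

lemma measure_INT_mono_ge:
  fixes B :: "real \<Rightarrow> 'b set" and N :: "'b measure"
  assumes fN: "finite_measure N" and I: "countable I" "I \<noteq> {}"
    and mono: "\<And>r r'. r \<le> r' \<Longrightarrow> B r \<subseteq> B r'"
    and Bs: "\<And>s. s \<in> I \<Longrightarrow> B s \<in> sets N" and Bc: "\<And>s. s \<in> I \<Longrightarrow> measure N (B s) \<ge> c"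
  shows "measure N (\<Inter>s\<in>I. B s) \<ge> c"
proof -
  define f where "f = from_nat_into I"
  define A where "A k = B (Min (f ` {..k}))" for k
  have fI: "f j \<in> I" for j unfolding f_def using from_nat_into[OF I(2)] .
  have MinI: "Min (f ` {..k}) \<in> I" for k
  proof -
    have "Min (f ` {..k}) \<in> f ` {..k}" by (rule Min_in) auto
    then obtain j where "Min (f ` {..k}) = f j" by blast
    then show ?thesis using fI[of j] by simp
  qed
  have dec: "decseq A" unfolding A_def
    by (intro antimonoI mono Min_antimono) auto
  have IA: "(\<Inter>k. A k) = (\<Inter>s\<in>I. B s)"
  proof
    show "(\<Inter>s\<in>I. B s) \<subseteq> (\<Inter>k. A k)" unfolding A_def using MinI by blast
    show "(\<Inter>k. A k) \<subseteq> (\<Inter>s\<in>I. B s)"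
    proof
      fix z assume z: "z \<in> (\<Inter>k. A k)"
      show "z \<in> (\<Inter>s\<in>I. B s)"
      proof
        fix s assume s: "s \<in> I"
        have "s \<in> range f" unfolding f_def using range_from_nat_into[OF I(2) I(1)] s by simp
        then obtain j where j: "s = f j" by blast
        have "Min (f ` {..j}) \<le> s" using j by (intro Min_le) auto
        hence "A j \<subseteq> B s" unfolding A_def by (rule mono)
        then show "z \<in> B s" using z by blast
      qed
    qed
  qed
  have "(\<lambda>k. measure N (A k)) \<longlonglongrightarrow> measure N (\<Inter>k. A k)"
  proof -
    have rA: "range A \<subseteq> sets N" unfolding A_def using MinI Bs by auto
    show ?thesis by (rule finite_measure.finite_Lim_measure_decseq[OF fN rA dec])
  qed
  moreover have "measure N (A k) \<ge> c" for k unfolding A_def using Bc MinI by blast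
  ultimately have "measure N (\<Inter>k. A k) \<ge> c" by (intro LIMSEQ_le_const) auto
  then show ?thesis using IA by simp
qed

lemma emp_upper:
  fixes S m :: real assumes "0 \<le> S" "S \<le> m" "m > 0"
  shows "sqrt ((1 + S) / (m + 1)) \<le> sqrt (S / m) + sqrt (1 / (m + 1))"
proof -
  have "(1 + S) / (m + 1) = S / (m + 1) + 1 / (m + 1)" by (simp add: add_divide_distrib)
  also have "S / (m + 1) \<le> S / m" using assms by (intro divide_left_mono) auto
  finally have "sqrt ((1 + S) / (m + 1)) \<le> sqrt (S / m + 1 / (m + 1))" by simp
  also have "\<dots> \<le> sqrt (S / m) + sqrt (1 / (m + 1))" using assms by (intro sqrt_add_le_add_sqrt) auto
  finally show ?thesis .
qed

lemma emp_lower: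
  fixes S m :: real assumes "0 \<le> S" "S \<le> m" "m > 0"
  shows "sqrt (S / m) \<le> sqrt ((1 + S) / (m + 1))"
proof -
  have "S * (m + 1) \<le> (1 + S) * m" using assms by (simp add: algebra_simps)
  hence "S / m \<le> (1 + S) / (m + 1)" using assms by (simp add: divide_simps)
  then show ?thesis by simp
qed

lemma nat_floor_bounds:
  fixes x :: real assumes "0 \<le> x"
  shows "real (nat \<lfloor>x\<rfloor>) \<le> x" "x < real (nat \<lfloor>x\<rfloor>) + 1"
proof -
  have f0: "\<lfloor>x\<rfloor> \<ge> 0" using assms by simp
  have "real (nat \<lfloor>x\<rfloor>) = real_of_int \<lfloor>x\<rfloor>" using f0 by simp
  then show "real (nat \<lfloor>x\<rfloor>) \<le> x" "x < real (nat \<lfloor>x\<rfloor>) + 1"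
    using floor_correct[of x] by auto
qed

lemma sqrt_le_plus:
  fixes a b :: real assumes "0 \<le> a" "0 \<le> b" "a \<le> c + b" "0 \<le> c"
  shows "sqrt a \<le> sqrt c + sqrt b"
proof -
  have "sqrt a \<le> sqrt (c + b)" using assms by simp
  also have "\<dots> \<le> sqrt c + sqrt b" using assms by (intro sqrt_add_le_add_sqrt) auto
  finally show ?thesis .
qed

lemma (in prob_space) grid_bound:
  fixes X :: "'i \<Rightarrow> 'a \<Rightarrow> 'b" and N :: "'b measure" and B :: "real \<Rightarrow> 'b set"
  assumes J: "finite J" and ind: "indep_vars (\<lambda>_. N) X J"
    and rv: "\<And>j. j \<in> J \<Longrightarrow> X j \<in> measurable M N"
    and dist: "\<And>j. j \<in> J \<Longrightarrow> distr M N (X j) = N"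
    and pN: "prob_space N" and m: "card J > 0"
    and Bs: "\<And>r. B r \<in> sets N"
    and mono: "\<And>r r'. r \<le> r' \<Longrightarrow> B r \<subseteq> B r'"
    and lc: "\<And>r z. z \<in> B r \<Longrightarrow> \<exists>s<r. z \<in> B s"
    and K: "K > 0" and t: "t > 0"
    and A: "A \<in> events"
    and Asub: "A \<subseteq> {\<omega>\<in>space M. \<exists>r. \<bar>sqrt ((1 + real (card {j\<in>J. X j \<omega> \<in> B r})) / (real (card J) + 1))
                  - sqrt (measure N (B r))\<bar> > t + sqrt (1 / real K) + sqrt (1 / (real (card J) + 1))}"
  shows "prob A \<le> 2 * (real K + 1) * exp (- real (card J) * t^2)"
proof -
  define mm where "mm = real (card J)"
  have mm0: "mm > 0" using m unfolding mm_def by simp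
  have fN: "finite_measure N" using pN by (simp add: prob_space_def)
  define F where "F r = measure N (B r)" for r
  have Fmono: "F r \<le> F r'" if "r \<le> r'" for r r'
    unfolding F_def using mono[OF that] Bs by (intro finite_measure.finite_measure_mono[OF fN])
  have F01: "0 \<le> F r" "F r \<le> 1" for r unfolding F_def using prob_space.prob_le_1[OF pN] by auto
  define q where "q k = real k / real K" for k :: nat
  define Cs where "Cs k = (\<Union>s\<in>{s\<in>\<rat>. F s < q k}. B s)" for k
  define R where "R k = {s. q k \<le> F s}" for k
  define T where "T k = {s \<in> R k. s \<in> \<rat> \<or> s = Inf (R k)}" for k
  define Ds where "Ds k = (if T k = {} then space N else (\<Inter>s\<in>T k. B s))" for k
  define Sc where "Sc \<omega> E = real (card {j\<in>J. X j \<omega> \<in> E})" for \<omega> E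
  define EvU where "EvU k = {\<omega>\<in>space M. sqrt (Sc \<omega> (Cs k) / mm) > sqrt (measure N (Cs k)) + t}" for k
  define EvL where "EvL k = {\<omega>\<in>space M. sqrt (Sc \<omega> (Ds k) / mm) < sqrt (measure N (Ds k)) - t}" for k
  define e where "e = exp (- mm * t^2)"
  have q0: "q k \<ge> 0" for k unfolding q_def by simp
  have CsS: "Cs k \<in> sets N" for k
    unfolding Cs_def
    by (intro sets.countable_UN'' countable_subset[OF _ countable_rat] Bs) auto
  have Csm: "measure N (Cs k) \<le> q k" for k
    unfolding Cs_def
    by (rule measure_UN_mono_le[OF fN countable_subset[OF _ countable_rat] mono Bs _ q0])
       (auto simp: F_def)
  have Tc: "countable (T k)" for k
    by (rule countable_subset[of _ "\<rat> \<union> {Inf (R k)}"]) (auto simp: T_def countable_rat)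
  have DsS: "Ds k \<in> sets N" for k
    unfolding Ds_def using Tc[of k] Bs by (auto intro!: sets.countable_INT')
  have Dsm: "measure N (Ds k) \<ge> q k" if "k \<le> K" for k
  proof (cases "T k = {}")
    case True
    have "q k \<le> 1" unfolding q_def using that K by (simp add: divide_le_eq_1)
    then show ?thesis using True prob_space.prob_space[OF pN] unfolding Ds_def by simp
  next
    case False
    then have "q k \<le> measure N (\<Inter>s\<in>T k. B s)"
      by (intro measure_INT_mono_ge[OF fN Tc False mono Bs]) (auto simp: T_def R_def F_def)
    then show ?thesis using False unfolding Ds_def by simp
  qed
  have Sc_le: "Sc \<omega> E \<le> mm" for \<omega> E
    unfolding Sc_def mm_def using J by (simp add: card_mono)
  have Sc_mono: "Sc \<omega> E \<le> Sc \<omega> E'" if "E \<subseteq> E'" for \<omega> E E'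
    unfolding Sc_def using J that by (intro of_nat_mono card_mono) auto
  have Sc0: "Sc \<omega> E \<ge> 0" for \<omega> E unfolding Sc_def by simp
  have EvU_ev: "EvU k \<in> events" for k
  proof -
    have "(\<lambda>\<omega>. sqrt (real (card {j\<in>J. X j \<omega> \<in> Cs k}) / mm)) \<in> borel_measurable M"
      using measurable_compose[OF borel_measurable_divide[OF card_measurable[OF J rv CsS] borel_measurable_const] borel_measurable_sqrt] by simp
    then show ?thesis unfolding EvU_def Sc_def by (intro borel_measurable_less borel_measurable_const)
  qed
  have EvL_ev: "EvL k \<in> events" for k
  proof -
    have "(\<lambda>\<omega>. sqrt (real (card {j\<in>J. X j \<omega> \<in> Ds k}) / mm)) \<in> borel_measurable M"
      using measurable_compose[OF borel_measurable_divide[OF card_measurable[OF J rv DsS] borel_measurable_const] borel_measurable_sqrt] by simp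
    then show ?thesis unfolding EvL_def Sc_def by (intro borel_measurable_less borel_measurable_const)
  qed
  have EvU_p: "prob (EvU k) \<le> e" for k
    unfolding EvU_def Sc_def e_def mm_def using sqrt_upper[OF J ind rv dist pN CsS t m] .
  have EvL_p: "prob (EvL k) \<le> e" for k
    unfolding EvL_def Sc_def e_def mm_def using sqrt_lower[OF J ind rv dist pN DsS t m] .
  define eps where "eps = t + sqrt (1 / real K) + sqrt (1 / (mm + 1))"
  have cover: "A \<subseteq> (\<Union>k\<in>{0..K}. EvU k) \<union> (\<Union>k\<in>{0..K}. EvL k)"
  proof
    fix \<omega> assume \<omega>A: "\<omega> \<in> A"
    then have \<omega>: "\<omega> \<in> space M" using Asub by blast
    obtain r where r: "\<bar>sqrt ((1 + Sc \<omega> (B r)) / (mm + 1)) - sqrt (F r)\<bar> > eps"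
      using Asub \<omega>A unfolding Sc_def F_def mm_def eps_def by blast
    define S where "S = Sc \<omega> (B r)"
    have S: "0 \<le> S" "S \<le> mm" unfolding S_def using Sc0 Sc_le by auto
    define x where "x = real K * F r"
    have x0: "0 \<le> x" unfolding x_def using F01 by simp
    have xK: "x \<le> real K" unfolding x_def using F01[of r] K by simp
    have fl: "real (nat \<lfloor>x\<rfloor>) \<le> x" "x < real (nat \<lfloor>x\<rfloor>) + 1" using nat_floor_bounds[OF x0] by auto
    have Kpos: "real K > 0" using K by simp
    show "\<omega> \<in> (\<Union>k\<in>{0..K}. EvU k) \<union> (\<Union>k\<in>{0..K}. EvL k)"
    proof (cases "sqrt ((1 + S) / (mm + 1)) > sqrt (F r)")
      case True
      hence up: "sqrt ((1 + S) / (mm + 1)) - sqrt (F r) > eps" using r unfolding S_def by linarith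
      have "(1 + S) / (mm + 1) \<le> 1" using S by simp
      hence "sqrt ((1 + S) / (mm + 1)) \<le> 1" by simp
      have Flt: "F r < 1"
      proof (rule ccontr)
        assume "\<not> F r < 1"
        hence "F r = 1" using F01[of r] by simp
        hence "sqrt (F r) = 1" by simp
        moreover have "sqrt (1 / real K) \<ge> 0" "sqrt (1 / (mm + 1)) \<ge> 0" using mm0 by simp_all
        ultimately show False using up \<open>sqrt ((1 + S) / (mm + 1)) \<le> 1\<close> t unfolding eps_def
          by linarith
      qed
      define k where "k = nat \<lfloor>x\<rfloor> + 1"
      have xlt: "x < real K" unfolding x_def using Flt Kpos by simp
      have kK: "k \<le> K" unfolding k_def using fl xlt by linarith
      have qk1: "q k > F r" unfolding q_def k_def x_def using fl Kpos unfolding x_def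
        by (simp add: field_simps)
      have qk2: "q k \<le> F r + 1 / real K" unfolding q_def k_def using fl Kpos unfolding x_def
        by (simp add: field_simps)
      have BC: "B r \<subseteq> Cs k"
      proof
        fix z assume "z \<in> B r"
        then obtain s where s: "s < r" "z \<in> B s" using lc by blast
        obtain s' where s': "s' \<in> \<rat>" "s < s'" "s' < r" using Rats_dense_in_real[OF s(1)] by blast
        have "z \<in> B s'" using mono[of s s'] s s' by auto
        moreover have "F s' < q k" using Fmono[of s' r] s' qk1 by simp
        ultimately show "z \<in> Cs k" unfolding Cs_def using s' by blast
      qed
      have "\<omega> \<in> EvU k"
      proof (rule ccontr)
        assume "\<omega> \<notin> EvU k"
        hence h: "sqrt (Sc \<omega> (Cs k) / mm) \<le> sqrt (measure N (Cs k)) + t" unfolding EvU_def using \<omega> by auto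
        have "sqrt ((1 + S) / (mm + 1)) \<le> sqrt (S / mm) + sqrt (1 / (mm + 1))"
          by (rule emp_upper[OF S mm0])
        also have "sqrt (S / mm) \<le> sqrt (Sc \<omega> (Cs k) / mm)"
          unfolding S_def using Sc_mono[OF BC] mm0 by (simp add: divide_right_mono)
        also have "\<dots> \<le> sqrt (measure N (Cs k)) + t" by (rule h)
        also have "sqrt (measure N (Cs k)) \<le> sqrt (F r) + sqrt (1 / real K)"
          using Csm[of k] qk2 F01[of r] by (intro sqrt_le_plus) auto
        finally have "sqrt ((1 + S) / (mm + 1)) \<le> sqrt (F r) + eps" unfolding eps_def by simp
        then show False using up by simp
      qed
      then show ?thesis using kK by auto
    next
      case False
      hence lo: "sqrt (F r) - sqrt ((1 + S) / (mm + 1)) > eps" using r unfolding S_def by linarith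
      define k where "k = nat \<lfloor>x\<rfloor>"
      have kK: "k \<le> K" unfolding k_def using fl xK by linarith
      have qk1: "q k \<le> F r" unfolding q_def k_def using fl Kpos unfolding x_def
        by (simp add: field_simps)
      have qk2: "F r < q k + 1 / real K" unfolding q_def k_def using fl Kpos unfolding x_def
        by (simp add: field_simps)
      have rR: "r \<in> R k" unfolding R_def using qk1 by simp
      have "\<exists>r'\<in>T k. r' \<le> r"
      proof (cases "\<exists>r''\<in>R k. r'' < r")
        case True
        then obtain r'' where r'': "r'' \<in> R k" "r'' < r" by blast
        obtain s' where s': "s' \<in> \<rat>" "r'' < s'" "s' < r" using Rats_dense_in_real[OF r''(2)] by blast
        have "s' \<in> R k" using r''(1) Fmono[of r'' s'] s' unfolding R_def by auto
        then show ?thesis using s' unfolding T_def by (intro bexI[of _ s']) auto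
      next
        case False
        hence "Inf (R k) = r" using rR by (intro cInf_eq_minimum) (auto simp: not_less)
        then show ?thesis using rR unfolding T_def by (intro bexI[of _ r]) auto
      qed
      then obtain r' where r': "r' \<in> T k" "r' \<le> r" by blast
      have Tne: "T k \<noteq> {}" using r' by blast
      have DB: "Ds k \<subseteq> B r" unfolding Ds_def using Tne r' mono[OF r'(2)] by auto
      have "\<omega> \<in> EvL k"
      proof (rule ccontr)
        assume "\<omega> \<notin> EvL k"
        hence h: "sqrt (measure N (Ds k)) - t \<le> sqrt (Sc \<omega> (Ds k) / mm)" unfolding EvL_def using \<omega> by auto
        have "sqrt (F r) \<le> sqrt (q k) + sqrt (1 / real K)"
          using qk2 q0[of k] F01[of r] by (intro sqrt_le_plus) auto
        also have "sqrt (q k) \<le> sqrt (measure N (Ds k))" using Dsm[OF kK] by simp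
        also have "sqrt (measure N (Ds k)) \<le> sqrt (Sc \<omega> (Ds k) / mm) + t" using h by simp
        also have "sqrt (Sc \<omega> (Ds k) / mm) \<le> sqrt (S / mm)"
          unfolding S_def using Sc_mono[OF DB] mm0 by (simp add: divide_right_mono)
        also have "sqrt (S / mm) \<le> sqrt ((1 + S) / (mm + 1))" by (rule emp_lower[OF S mm0])
        finally have "sqrt (F r) \<le> sqrt ((1 + S) / (mm + 1)) + t + sqrt (1 / real K)" by simp
        moreover have "sqrt (1 / (mm + 1)) \<ge> 0" using mm0 by simp
        ultimately have "sqrt (F r) \<le> sqrt ((1 + S) / (mm + 1)) + eps"
          unfolding eps_def by linarith
        then show False using lo by simp
      qed
      then show ?thesis using kK by auto
    qed
  qed
  have a1: "prob A \<le> prob ((\<Union>k\<in>{0..K}. EvU k) \<union> (\<Union>k\<in>{0..K}. EvL k))"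
    using cover EvU_ev EvL_ev by (intro finite_measure_mono) auto
  have a2: "prob ((\<Union>k\<in>{0..K}. EvU k) \<union> (\<Union>k\<in>{0..K}. EvL k)) \<le> prob (\<Union>k\<in>{0..K}. EvU k) + prob (\<Union>k\<in>{0..K}. EvL k)"
    using EvU_ev EvL_ev by (intro measure_Un_le) auto
  have "prob (\<Union>k\<in>{0..K}. EvU k) \<le> (\<Sum>k\<in>{0..K}. prob (EvU k))"
    using EvU_ev by (intro finite_measure_subadditive_finite) auto
  also have "\<dots> \<le> (\<Sum>k\<in>{0..K}. e)" using EvU_p by (intro sum_mono) auto
  finally have a3: "prob (\<Union>k\<in>{0..K}. EvU k) \<le> (real K + 1) * e" by (simp add: add.commute)
  have "prob (\<Union>k\<in>{0..K}. EvL k) \<le> (\<Sum>k\<in>{0..K}. prob (EvL k))"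
    using EvL_ev by (intro finite_measure_subadditive_finite) auto
  also have "\<dots> \<le> (\<Sum>k\<in>{0..K}. e)" using EvL_p by (intro sum_mono) auto
  finally have a4: "prob (\<Union>k\<in>{0..K}. EvL k) \<le> (real K + 1) * e" by (simp add: add.commute)
  have "prob A \<le> 2 * (real K + 1) * e" using a1 a2 a3 a4 by linarith
  then show ?thesis unfolding e_def mm_def .
qed



lemma ball_mono: "r \<le> r' \<Longrightarrow> geodesic_ball M x r \<subseteq> geodesic_ball M x r'"
  unfolding geodesic_ball_def by (auto intro: less_le_trans)

lemma ball_lc:
  assumes "z \<in> geodesic_ball M x r" shows "\<exists>s<r. z \<in> geodesic_ball M x s"
proof -
  have z: "z \<in> M" "geodesic_dist M x z < ereal r" using assms unfolding geodesic_ball_def by auto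
  obtain d0 where d0: "geodesic_dist M x z = ereal d0"
    using z(2) geodesic_dist_nonneg[of M x z] by (cases "geodesic_dist M x z") auto
  have "d0 < r" using z(2) d0 by simp
  then show ?thesis using z d0 unfolding geodesic_ball_def
    by (intro exI[of _ "(d0 + r) / 2"]) auto
qed

lemma ball_center: "x \<in> M \<Longrightarrow> r > 0 \<Longrightarrow> x \<in> geodesic_ball M x r"
  unfolding geodesic_ball_def using geodesic_dist_refl[of x M] by simp

lemma lc_extend:
  fixes h :: "real \<Rightarrow> real"
  assumes r: "r > 0" and lim: "(h \<longlongrightarrow> h r) (at_left r)" and Q: "\<And>q. q \<in> \<rat> \<Longrightarrow> q > 0 \<Longrightarrow> h q \<le> \<epsilon>"
  shows "h r \<le> \<epsilon>"
proof (rule ccontr)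
  assume "\<not> h r \<le> \<epsilon>"
  hence "\<epsilon> < h r" by simp
  hence "eventually (\<lambda>s. \<epsilon> < h s) (at_left r)" using lim by (rule order_tendstoD(1)[rotated])
  moreover have "eventually (\<lambda>s. s \<in> {0<..<r}) (at_left r)" using eventually_at_left_real[OF r] .
  ultimately have "eventually (\<lambda>s. \<epsilon> < h s \<and> s \<in> {0<..<r}) (at_left r)" by (rule eventually_conj)
  then obtain b where b: "b < r" "\<And>y. y > b \<Longrightarrow> y < r \<Longrightarrow> \<epsilon> < h y \<and> y \<in> {0<..<r}"
    unfolding eventually_at_left_field by blast
  obtain q where q: "q \<in> \<rat>" "b < q" "q < r" using Rats_dense_in_real[OF b(1)] by blast
  have "\<epsilon> < h q" "q > 0" using b(2)[OF q(2) q(3)] by auto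
  then show False using Q[OF q(1)] by simp
qed

lemma mono_left_tendsto:
  fixes F :: "real \<Rightarrow> real"
  assumes mono: "\<And>s s'. s \<le> s' \<Longrightarrow> F s \<le> F s'" and approx: "\<And>e. e > 0 \<Longrightarrow> \<exists>s<r. F r - F s < e"
  shows "(F \<longlongrightarrow> F r) (at_left r)"
proof (rule order_tendstoI)
  fix a assume "a < F r"
  then obtain s where s: "s < r" "F r - F s < F r - a" using approx[of "F r - a"] by auto
  have "eventually (\<lambda>y. y \<in> {s<..<r}) (at_left r)" using eventually_at_left_real[OF s(1)] .
  then show "eventually (\<lambda>y. a < F y) (at_left r)"
  proof (rule eventually_mono)
    fix y assume "y \<in> {s<..<r}"
    then have "F s \<le> F y" using mono[of s y] by auto
    then show "a < F y" using s by linarith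
  qed
next
  fix a assume "F r < a"
  have "eventually (\<lambda>y. y \<in> {r - 1<..<r}) (at_left r)" by (rule eventually_at_left_real) simp
  then show "eventually (\<lambda>y. F y < a) (at_left r)"
  proof (rule eventually_mono)
    fix y assume "y \<in> {r - 1<..<r}"
    then have "F y \<le> F r" using mono[of y r] by auto
    then show "F y < a" using \<open>F r < a\<close> by linarith
  qed
qed

lemma measure_left_tendsto:
  fixes B :: "real \<Rightarrow> 'b set" and N :: "'b measure"
  assumes fN: "finite_measure N" and Bs: "\<And>r. B r \<in> sets N"
    and mono: "\<And>r r'. r \<le> r' \<Longrightarrow> B r \<subseteq> B r'"
    and lc: "\<And>r z. z \<in> B r \<Longrightarrow> \<exists>s<r. z \<in> B s"
  shows "((\<lambda>s. measure N (B s)) \<longlongrightarrow> measure N (B r)) (at_left r)"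
proof (rule mono_left_tendsto)
  show "measure N (B s) \<le> measure N (B s')" if "s \<le> s'" for s s'
    using mono[OF that] Bs by (intro finite_measure.finite_measure_mono[OF fN])
  fix e :: real assume e: "e > 0"
  define A where "A k = B (r - 1 / (real k + 1))" for k :: nat
  have inc: "incseq A" unfolding A_def
    by (intro monoI mono) (simp add: frac_le)
  have UA: "(\<Union>k. A k) = B r"
  proof
    show "(\<Union>k. A k) \<subseteq> B r" unfolding A_def by (intro UN_least mono) simp
    show "B r \<subseteq> (\<Union>k. A k)"
    proof
      fix z assume "z \<in> B r"
      then obtain s where s: "s < r" "z \<in> B s" using lc by blast
      obtain k :: nat where k0: "inverse (real (Suc k)) < r - s"
        using reals_Archimedean[of "r - s"] s(1) by auto
      have k: "1 / (real k + 1) < r - s" using k0 by (simp add: inverse_eq_divide add.commute)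
      have "s \<le> r - 1 / (real k + 1)" using k by simp
      then show "z \<in> (\<Union>k. A k)" unfolding A_def using mono s(2) by blast
    qed
  qed
  have rA: "range A \<subseteq> sets N" unfolding A_def using Bs by auto
  have "(\<lambda>k. measure N (A k)) \<longlonglongrightarrow> measure N (\<Union>k. A k)"
    by (rule finite_measure.finite_Lim_measure_incseq[OF fN rA inc])
  hence "(\<lambda>k. measure N (A k)) \<longlonglongrightarrow> measure N (B r)" using UA by simp
  then obtain k where "dist (measure N (A k)) (measure N (B r)) < e"
    using e by (auto dest!: LIMSEQ_D[where r=e] simp: dist_real_def)
  then show "\<exists>s<r. measure N (B r) - measure N (B s) < e"
    unfolding A_def by (intro exI[of _ "r - 1 / (real k + 1)"]) (auto simp: dist_real_def)
qed

lemma card_left_eventually: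
  fixes B :: "real \<Rightarrow> 'b set"
  assumes J: "finite J"
    and mono: "\<And>r r'. r \<le> r' \<Longrightarrow> B r \<subseteq> B r'"
    and lc: "\<And>r z. z \<in> B r \<Longrightarrow> \<exists>s<r. z \<in> B s"
  shows "eventually (\<lambda>s. {j\<in>J. Y j \<in> B s} = {j\<in>J. Y j \<in> B r}) (at_left r)"
proof -
  have "\<forall>j\<in>J. eventually (\<lambda>s. (Y j \<in> B s) = (Y j \<in> B r)) (at_left r)"
  proof
    fix j assume "j \<in> J"
    show "eventually (\<lambda>s. (Y j \<in> B s) = (Y j \<in> B r)) (at_left r)"
    proof (cases "Y j \<in> B r")
      case True
      then obtain s where s: "s < r" "Y j \<in> B s" using lc by blast
      have "eventually (\<lambda>y. y \<in> {s<..<r}) (at_left r)" using eventually_at_left_real[OF s(1)] .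
      then show ?thesis
      proof (rule eventually_mono)
        fix y assume "y \<in> {s<..<r}"
        then have "B s \<subseteq> B y" using mono[of s y] by auto
        then show "(Y j \<in> B y) = (Y j \<in> B r)" using s True by auto
      qed
    next
      case False
      have "eventually (\<lambda>y. y \<in> {r - 1<..<r}) (at_left r)" by (rule eventually_at_left_real) simp
      then show ?thesis
      proof (rule eventually_mono)
        fix y assume "y \<in> {r - 1<..<r}"
        then have "B y \<subseteq> B r" using mono[of y r] by auto
        then show "(Y j \<in> B y) = (Y j \<in> B r)" using False by auto
      qed
    qed
  qed
  then have "eventually (\<lambda>s. \<forall>j\<in>J. (Y j \<in> B s) = (Y j \<in> B r)) (at_left r)"
    by (rule eventually_ball_finite[OF J])
  then show ?thesis by (rule eventually_mono) auto
qed

lemma Ai_sets: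
  fixes M :: "'a::euclidean_space set" and \<mu> :: "'a measure" and J :: "nat set"
  assumes sm: "submanifold M" and pmu: "prob_space \<mu>" and sp: "space \<mu> = M"
    and st: "sets \<mu> = sets (restrict_space borel M)" and J: "finite J"
  shows "{p \<in> space (\<mu> \<Otimes>\<^sub>M PiM J (\<lambda>_. \<mu>)). \<exists>r\<in>\<rat>. r > 0 \<and>
      \<bar>sqrt ((1 + real (card {j\<in>J. snd p j \<in> geodesic_ball M (fst p) r})) / c)
        - sqrt (measure \<mu> (geodesic_ball M (fst p) r))\<bar> > eps} \<in> sets (\<mu> \<Otimes>\<^sub>M PiM J (\<lambda>_. \<mu>))"
proof -
  let ?S = "\<mu> \<Otimes>\<^sub>M PiM J (\<lambda>_. \<mu>)"
  define G where "G r = {p \<in> M \<times> M. geodesic_dist M (fst p) (snd p) < ereal r}" for r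
  have GS: "G r \<in> sets (\<mu> \<Otimes>\<^sub>M \<mu>)" for r unfolding G_def by (rule geo_sets[OF sm sp st])
  interpret mu: prob_space \<mu> by (rule pmu)
  define g where "g r p = \<bar>sqrt ((1 + (\<Sum>j\<in>J. indicator (G r) (fst p, snd p j))) / c)
        - sqrt (enn2real (emeasure \<mu> (Pair (fst p) -` G r)))\<bar>" for r p
  have gm: "g r \<in> borel_measurable ?S" for r
  proof -
    have s1: "(\<lambda>p. \<Sum>j\<in>J. indicator (G r) (fst p, snd p j) :: real) \<in> borel_measurable ?S"
    proof (intro borel_measurable_sum)
      fix j assume j: "j \<in> J"
      have "(\<lambda>p. (fst p, snd p j)) \<in> measurable ?S (\<mu> \<Otimes>\<^sub>M \<mu>)"
        by (intro measurable_Pair measurable_fst measurable_compose[OF measurable_snd measurable_component_singleton[OF j]])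
      then show "(\<lambda>p. indicator (G r) (fst p, snd p j) :: real) \<in> borel_measurable ?S"
        by (rule measurable_compose) (rule borel_measurable_indicator[OF GS])
    qed
    have s2: "(\<lambda>p. enn2real (emeasure \<mu> (Pair (fst p) -` G r))) \<in> borel_measurable ?S"
    proof -
      have "(\<lambda>x. emeasure \<mu> (Pair x -` G r)) \<in> borel_measurable \<mu>"
        by (rule sigma_finite_measure.measurable_emeasure_Pair[OF _ GS]) unfold_locales
      then have "(\<lambda>x. enn2real (emeasure \<mu> (Pair x -` G r))) \<in> borel_measurable \<mu>"
        by (rule borel_measurable_enn2real)
      then show ?thesis by (rule measurable_compose[OF measurable_fst])
    qed
    show ?thesis unfolding g_def using s1 s2 by measurable
  qed
  have eqg: "\<bar>sqrt ((1 + real (card {j\<in>J. snd p j \<in> geodesic_ball M (fst p) r})) / c)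
        - sqrt (measure \<mu> (geodesic_ball M (fst p) r))\<bar> = g r p" if p: "p \<in> space ?S" for p r
  proof -
    have x: "fst p \<in> M" and y: "\<And>j. j \<in> J \<Longrightarrow> snd p j \<in> M"
      using p by (auto simp: space_pair_measure space_PiM sp PiE_iff)
    have "{j\<in>J. snd p j \<in> geodesic_ball M (fst p) r} = {j\<in>J. (fst p, snd p j) \<in> G r}"
      using x y by (auto simp: G_def geodesic_ball_def)
    hence c1: "real (card {j\<in>J. snd p j \<in> geodesic_ball M (fst p) r}) = (\<Sum>j\<in>J. indicator (G r) (fst p, snd p j))"
      using card_sum_ind[OF J, of "\<lambda>j p. (fst p, snd p j)" p "G r"] by simp
    have "Pair (fst p) -` G r = geodesic_ball M (fst p) r" using x by (auto simp: G_def geodesic_ball_def)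
    hence c2: "measure \<mu> (geodesic_ball M (fst p) r) = enn2real (emeasure \<mu> (Pair (fst p) -` G r))"
      by (simp add: measure_def)
    show ?thesis unfolding g_def c1 c2 ..
  qed
  have "{p \<in> space ?S. \<exists>r\<in>\<rat>. r > 0 \<and>
      \<bar>sqrt ((1 + real (card {j\<in>J. snd p j \<in> geodesic_ball M (fst p) r})) / c)
        - sqrt (measure \<mu> (geodesic_ball M (fst p) r))\<bar> > eps}
      = (\<Union>r\<in>{r\<in>\<rat>. r > 0}. {p \<in> space ?S. eps < g r p})"
    using eqg by auto
  also have "\<dots> \<in> sets ?S"
    by (intro sets.countable_UN'' countable_subset[OF _ countable_rat] borel_measurable_less gm borel_measurable_const) auto
  finally show ?thesis .
qed

lemma bad_i_bound:
  fixes M :: "'a::euclidean_space set" and \<mu> :: "'a measure" and P :: "'w measure"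
    and X :: "nat \<Rightarrow> 'w \<Rightarrow> 'a" and n i :: nat
  assumes sm: "submanifold M" and pmu: "prob_space \<mu>" and sp: "space \<mu> = M"
    and st: "sets \<mu> = sets (restrict_space borel M)" and pP: "prob_space P"
    and rvX: "\<And>j. j < n \<Longrightarrow> X j \<in> measurable P \<mu>"
    and dX: "\<And>j. j < n \<Longrightarrow> distr P \<mu> (X j) = \<mu>"
    and ind: "prob_space.indep_vars P (\<lambda>_. \<mu>) X {..<n}"
    and i: "i < n" and n2: "n \<ge> 2" and t: "t > 0"
  defines "J \<equiv> {..<n} - {i}"
  defines "A \<equiv> {p \<in> space (\<mu> \<Otimes>\<^sub>M PiM J (\<lambda>_. \<mu>)). \<exists>r\<in>\<rat>. r > 0 \<and>
      \<bar>sqrt ((1 + real (card {j\<in>J. snd p j \<in> geodesic_ball M (fst p) r})) / real n)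
        - sqrt (measure \<mu> (geodesic_ball M (fst p) r))\<bar> > t + 2 * sqrt (1 / real n)}"
  shows "{\<omega>\<in>space P. (X i \<omega>, restrict (\<lambda>j. X j \<omega>) J) \<in> A} \<in> sets P"
    and "measure P {\<omega>\<in>space P. (X i \<omega>, restrict (\<lambda>j. X j \<omega>) J) \<in> A}
           \<le> 2 * (real n + 1) * exp (- real (n - 1) * t^2)"
proof -
  interpret P: prob_space P by (rule pP)
  interpret mu: prob_space \<mu> by (rule pmu)
  let ?PJ = "PiM J (\<lambda>_. \<mu>)"
  let ?S = "\<mu> \<Otimes>\<^sub>M ?PJ"
  define Y where "Y \<omega> = restrict (\<lambda>j. X j \<omega>) J" for \<omega>
  have J: "finite J" unfolding J_def by simp
  have cardJ: "card J = n - 1" unfolding J_def using i by simp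
  have Jn: "\<And>j. j \<in> J \<Longrightarrow> j < n" unfolding J_def by simp
  have AS: "A \<in> sets ?S" unfolding A_def by (rule Ai_sets[OF sm pmu sp st J])
  have Ym: "Y \<in> measurable P ?PJ" unfolding Y_def by (intro measurable_restrict rvX Jn)
  have Zm: "(\<lambda>\<omega>. (X i \<omega>, Y \<omega>)) \<in> measurable P ?S" by (intro measurable_Pair rvX[OF i] Ym)
  have setP: "{\<omega>\<in>space P. (X i \<omega>, Y \<omega>) \<in> A} = (\<lambda>\<omega>. (X i \<omega>, Y \<omega>)) -` A \<inter> space P" by auto
  show ev: "{\<omega>\<in>space P. (X i \<omega>, restrict (\<lambda>j. X j \<omega>) J) \<in> A} \<in> sets P"
  proof -
    have "{\<omega>\<in>space P. (X i \<omega>, Y \<omega>) \<in> A} \<in> sets P" unfolding setP by (rule measurable_sets[OF Zm AS])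
    then show ?thesis unfolding Y_def .
  qed
  let ?Pi = "PiM {i} (\<lambda>_. \<mu>)"
  define R where "R \<omega> = restrict (\<lambda>j. X j \<omega>) {i}" for \<omega>
  have Rm: "R \<in> measurable P ?Pi" unfolding R_def by (intro measurable_restrict rvX) (use i in auto)
  have indRY: "P.indep_var ?Pi R ?PJ Y"
    unfolding R_def Y_def by (rule P.indep_var_restrict[OF ind]) (use i in \<open>auto simp: J_def\<close>)
  define Di where "Di = distr P ?Pi R"
  have pDi: "prob_space Di" unfolding Di_def by (rule P.prob_space_distr[OF Rm])
  define Nd where "Nd = distr P ?PJ Y"
  have pNd: "prob_space Nd" unfolding Nd_def by (rule P.prob_space_distr[OF Ym])
  have joint: "distr P (?Pi \<Otimes>\<^sub>M ?PJ) (\<lambda>\<omega>. (R \<omega>, Y \<omega>)) = Di \<Otimes>\<^sub>M Nd"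
    using indRY unfolding P.indep_var_distribution_eq Nd_def Di_def by simp
  have setsS: "sets (Di \<Otimes>\<^sub>M Nd) = sets (?Pi \<Otimes>\<^sub>M ?PJ)" unfolding Nd_def Di_def by (intro sets_pair_measure_cong) auto
  have RYm: "(\<lambda>\<omega>. (R \<omega>, Y \<omega>)) \<in> measurable P (?Pi \<Otimes>\<^sub>M ?PJ)" by (intro measurable_Pair Rm Ym)
  have prm: "(\<lambda>p. (fst p i, snd p)) \<in> measurable (?Pi \<Otimes>\<^sub>M ?PJ) ?S"
    by (intro measurable_Pair measurable_snd measurable_compose[OF measurable_fst measurable_component_singleton]) simp
  define A' where "A' = (\<lambda>p. (fst p i, snd p)) -` A \<inter> space (?Pi \<Otimes>\<^sub>M ?PJ)"
  have A'S: "A' \<in> sets (?Pi \<Otimes>\<^sub>M ?PJ)" unfolding A'_def by (rule measurable_sets[OF prm AS])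
  have setP': "{\<omega>\<in>space P. (X i \<omega>, Y \<omega>) \<in> A} = (\<lambda>\<omega>. (R \<omega>, Y \<omega>)) -` A' \<inter> space P"
  proof -
    have "(R \<omega>, Y \<omega>) \<in> space (?Pi \<Otimes>\<^sub>M ?PJ)" if "\<omega> \<in> space P" for \<omega>
      using measurable_space[OF RYm that] .
    moreover have "R \<omega> i = X i \<omega>" for \<omega> unfolding R_def by simp
    ultimately show ?thesis unfolding A'_def by auto
  qed
  define \<delta> where "\<delta> = 2 * (real n + 1) * exp (- real (n - 1) * t^2)"
  have \<delta>0: "\<delta> \<ge> 0" unfolding \<delta>_def by simp
  have sec: "emeasure Nd (Pair x -` A) \<le> ennreal \<delta>" if x: "x \<in> space \<mu>" for x
  proof -
    have xM: "x \<in> M" using x sp by simp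
    have secS: "Pair x -` A \<in> sets ?PJ" by (rule sets_Pair1[OF AS])
    have "emeasure Nd (Pair x -` A) = emeasure P (Y -` (Pair x -` A) \<inter> space P)"
      unfolding Nd_def by (rule emeasure_distr[OF Ym secS])
    also have "\<dots> = ennreal (measure P (Y -` (Pair x -` A) \<inter> space P))"
      by (rule P.emeasure_eq_measure)
    also have "measure P (Y -` (Pair x -` A) \<inter> space P) \<le> \<delta>"
    proof -
      define B where "B r = geodesic_ball M x r" for r
      have ev2: "Y -` (Pair x -` A) \<inter> space P \<in> P.events" by (rule measurable_sets[OF Ym secS])
      have sub: "Y -` (Pair x -` A) \<inter> space P \<subseteq> {\<omega>\<in>space P. \<exists>r. \<bar>sqrt ((1 + real (card {j\<in>J. X j \<omega> \<in> B r})) / (real (card J) + 1))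
                  - sqrt (measure \<mu> (B r))\<bar> > t + sqrt (1 / real n) + sqrt (1 / (real (card J) + 1))}"
      proof
        fix \<omega> assume h: "\<omega> \<in> Y -` (Pair x -` A) \<inter> space P"
        hence \<omega>: "\<omega> \<in> space P" and "(x, Y \<omega>) \<in> A" by auto
        then obtain r where r: "\<bar>sqrt ((1 + real (card {j\<in>J. Y \<omega> j \<in> geodesic_ball M x r})) / real n)
          - sqrt (measure \<mu> (geodesic_ball M x r))\<bar> > t + 2 * sqrt (1 / real n)"
          unfolding A_def by auto
        have cJ: "real (card J) + 1 = real n" using cardJ n2 by simp
        have "{j\<in>J. Y \<omega> j \<in> geodesic_ball M x r} = {j\<in>J. X j \<omega> \<in> B r}" unfolding Y_def B_def by auto
        then have "\<exists>r. \<bar>sqrt ((1 + real (card {j\<in>J. X j \<omega> \<in> B r})) / (real (card J) + 1))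
                  - sqrt (measure \<mu> (B r))\<bar> > t + sqrt (1 / real n) + sqrt (1 / (real (card J) + 1))"
          using r unfolding cJ B_def by (intro exI[of _ r]) simp
        then show "\<omega> \<in> {\<omega>\<in>space P. \<exists>r. \<bar>sqrt ((1 + real (card {j\<in>J. X j \<omega> \<in> B r})) / (real (card J) + 1))
                  - sqrt (measure \<mu> (B r))\<bar> > t + sqrt (1 / real n) + sqrt (1 / (real (card J) + 1))}"
          using \<omega> by blast
      qed
      have "measure P (Y -` (Pair x -` A) \<inter> space P) \<le> 2 * (real n + 1) * exp (- real (card J) * t^2)"
      proof (rule P.grid_bound[OF J P.indep_vars_subset[OF ind] rvX dX pmu _ _ _ _ _ t ev2 sub])
        show "J \<subseteq> {..<n}" unfolding J_def by auto
        show "\<And>j. j \<in> J \<Longrightarrow> j < n" by (rule Jn)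
        show "\<And>j. j \<in> J \<Longrightarrow> j < n" by (rule Jn)
        show "card J > 0" using cardJ n2 by simp
        show "\<And>r. B r \<in> sets \<mu>" unfolding B_def by (rule ball_sets[OF sm sp st xM])
        show "\<And>r r'. r \<le> r' \<Longrightarrow> B r \<subseteq> B r'" unfolding B_def by (rule ball_mono)
        show "\<And>r z. z \<in> B r \<Longrightarrow> \<exists>s<r. z \<in> B s" unfolding B_def by (rule ball_lc)
        show "n > 0" using n2 by simp
      qed
      then show ?thesis unfolding \<delta>_def cardJ .
    qed
    finally show ?thesis by (simp add: ennreal_leI)
  qed
  have sec': "emeasure Nd (Pair f -` A') \<le> ennreal \<delta>" if f: "f \<in> space Di" for f
  proof -
    have fP: "f \<in> space ?Pi" using f unfolding Di_def by simp
    have fi: "f i \<in> space \<mu>" using fP by (auto simp: space_PiM)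
    have Asp: "A \<subseteq> space ?S" unfolding A_def by blast
    have "Pair f -` A' = Pair (f i) -` A"
      using fP Asp unfolding A'_def by (auto simp: space_pair_measure)
    then show ?thesis using sec[OF fi] by simp
  qed
  have "emeasure P {\<omega>\<in>space P. (X i \<omega>, Y \<omega>) \<in> A} = emeasure (distr P (?Pi \<Otimes>\<^sub>M ?PJ) (\<lambda>\<omega>. (R \<omega>, Y \<omega>))) A'"
    unfolding setP' by (rule emeasure_distr[OF RYm A'S, symmetric])
  also have "\<dots> = emeasure (Di \<Otimes>\<^sub>M Nd) A'" unfolding joint ..
  also have "\<dots> = (\<integral>\<^sup>+f. emeasure Nd (Pair f -` A') \<partial>Di)"
    using A'S setsS by (intro sigma_finite_measure.emeasure_pair_measure_alt) (auto intro: prob_space_imp_sigma_finite pNd)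
  also have "\<dots> \<le> (\<integral>\<^sup>+f. ennreal \<delta> \<partial>Di)" by (intro nn_integral_mono sec')
  also have "\<dots> = ennreal \<delta>" by (simp add: prob_space.emeasure_space_1[OF pDi])
  finally have "emeasure P {\<omega>\<in>space P. (X i \<omega>, Y \<omega>) \<in> A} \<le> ennreal \<delta>" .
  then have "measure P {\<omega>\<in>space P. (X i \<omega>, Y \<omega>) \<in> A} \<le> \<delta>"
    using \<delta>0 by (simp add: P.emeasure_eq_measure)
  then show "measure P {\<omega>\<in>space P. (X i \<omega>, restrict (\<lambda>j. X j \<omega>) J) \<in> A}
           \<le> 2 * (real n + 1) * exp (- real (n - 1) * t^2)" unfolding \<delta>_def Y_def .
qed



lemma exp_nat_le: "exp (real k) \<le> 3 ^ k"
proof -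
  have "exp (real k) = exp 1 ^ k" by (simp add: exp_of_nat_mult[symmetric])
  also have "\<dots> \<le> 3 ^ k" by (intro power_mono exp_le) auto
  finally show ?thesis .
qed

lemma param:
  fixes n :: nat and p2 L :: real
  assumes p2: "0 < p2" "p2 \<le> 1/2" and n4: "n \<ge> 4"
    and L: "L = - ln (p2 / (4 * real n ^ 2))"
    and nt: "2 * sqrt (L / real n) < 1"
  shows "2 * sqrt (L / real n) - 2 * sqrt (1 / real n) > 0"
    and "real (n - 1) * (2 * sqrt (L / real n) - 2 * sqrt (1 / real n))^2 \<ge> L"
    and "exp (- L) = p2 / (4 * real n ^ 2)"
proof -
  have npos: "real n > 0" using n4 by simp
  have Ln: "L = ln (4 * real n ^ 2 / p2)" unfolding L using p2 npos by (simp add: ln_div)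
  show "exp (- L) = p2 / (4 * real n ^ 2)" unfolding L using p2 npos by simp
  have a: "4 * real n ^ 2 / p2 \<ge> 8 * real n ^ 2"
  proof -
    have "4 * real n ^ 2 / p2 \<ge> 4 * real n ^ 2 / (1/2)" using p2 npos by (intro divide_left_mono) auto
    then show ?thesis by simp
  qed
  have L_ge: "L \<ge> ln (8 * real n ^ 2)" unfolding Ln using a npos p2 by (subst ln_le_cancel_iff) auto
  have "exp (real 4) \<le> 3 ^ 4" by (rule exp_nat_le)
  also have "(3::real) ^ 4 \<le> 8 * real n ^ 2"
  proof -
    have "(4::real) ^ 2 \<le> real n ^ 2" using n4 by (intro power_mono) auto
    then show ?thesis by simp
  qed
  finally have "exp 4 \<le> 8 * real n ^ 2" by simp
  hence "4 \<le> ln (8 * real n ^ 2)" using npos by (subst ln_ge_iff) auto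
  hence L4: "L \<ge> 4" using L_ge by simp
  have "4 * (L / real n) < 1"
  proof -
    have "(2 * sqrt (L / real n))^2 < 1^2" using nt L4 npos by (intro power_strict_mono) auto
    then show ?thesis using L4 npos by (simp add: power_mult_distrib)
  qed
  hence n4L: "real n > 4 * L" using npos by (simp add: field_simps)
  hence n17: "real n \<ge> 17" using L4 by simp
  have "exp (real 5) \<le> 3 ^ 5" by (rule exp_nat_le)
  also have "(3::real) ^ 5 \<le> 8 * real n ^ 2"
  proof -
    have "(17::real) ^ 2 \<le> real n ^ 2" using n17 by (intro power_mono) auto
    then show ?thesis by simp
  qed
  finally have "exp 5 \<le> 8 * real n ^ 2" by simp
  hence "5 \<le> ln (8 * real n ^ 2)" using npos by (subst ln_ge_iff) auto
  hence L5: "L \<ge> 5" using L_ge by simp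
  define y where "y = sqrt L"
  have y2: "y^2 = L" unfolding y_def using L5 by simp
  have y22: "y \<ge> (11/5)"
  proof (rule ccontr)
    assume "\<not> y \<ge> (11/5)"
    then have "y < (11/5)" by simp
    moreover have y0: "y \<ge> 0" unfolding y_def using L5 by simp
    ultimately have "y * y < (11/5) * (11/5)" by (intro mult_strict_mono) auto
    moreover have "y * y = L" using y2 by (simp add: power2_eq_square)
    ultimately have "L < (11/5) * (11/5)" by simp
    then show False using L5 by simp
  qed
  define sn where "sn = sqrt (real n)"
  have sn: "sn > 0" "sn^2 = real n" unfolding sn_def using npos by auto
  have tf: "2 * sqrt (L / real n) - 2 * sqrt (1 / real n) = 2 * (y - 1) / sn"
    unfolding y_def sn_def by (simp add: real_sqrt_divide diff_divide_distrib right_diff_distrib)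
  show "2 * sqrt (L / real n) - 2 * sqrt (1 / real n) > 0" unfolding tf using y22 sn by simp
  have poly: "64 * (y - 1)^2 \<ge> 17 * y^2"
  proof -
    have "64 * (y - 1)^2 - 17 * y^2 = 47 * (y - 11/5)^2 + 394/5 * (y - 11/5) + 247/25"
      by (simp add: power2_eq_square field_simps)
    moreover have "47 * (y - 11/5)^2 \<ge> 0" "394/5 * (y - 11/5) \<ge> 0" using y22 by auto
    ultimately show ?thesis by linarith
  qed
  have n1: "real (n - 1) = real n - 1" using n4 by simp
  have "real (n - 1) * (2 * (y - 1) / sn)^2 = (real n - 1) * (4 * (y - 1)^2) / real n"
    unfolding n1 using sn by (simp add: power_divide power_mult_distrib power2_eq_square algebra_simps)
  also have "\<dots> \<ge> L"
  proof -
    have "(real n - 1) * (4 * (y - 1)^2) \<ge> (real n - 1) * (17 / 16 * y^2)"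
      using poly n17 by (intro mult_left_mono) auto
    also have "(real n - 1) * (17 / 16 * y^2) \<ge> real n * y^2"
    proof -
      have "(real n - 1) * 17 / 16 \<ge> real n" using n17 by simp
      then have "((real n - 1) * 17 / 16) * y^2 \<ge> real n * y^2" by (intro mult_right_mono) auto
      then show ?thesis by (simp add: algebra_simps)
    qed
    finally have "(real n - 1) * (4 * (y - 1)^2) \<ge> real n * L" using y2 by simp
    then show ?thesis using npos by (simp add: field_simps)
  qed
  finally show "real (n - 1) * (2 * sqrt (L / real n) - 2 * sqrt (1 / real n))^2 \<ge> L" unfolding tf .
qed



lemma sqrt_diff_le1:
  fixes a b :: real assumes "0 \<le> a" "a \<le> 1" "0 \<le> b" "b \<le> 1"
  shows "\<bar>sqrt a - sqrt b\<bar> \<le> 1"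
proof -
  have "sqrt a \<le> 1" "sqrt b \<le> 1" "0 \<le> sqrt a" "0 \<le> sqrt b" using assms by auto
  then show ?thesis by linarith
qed

theorem mainTheorem9:
  fixes M :: "'a::euclidean_space set"
    and \<mu> :: "'a measure"
    and P :: "'w measure"
    and X :: "nat \<Rightarrow> 'w \<Rightarrow> 'a"
    and n :: nat and p2 :: real
  assumes "submanifold M"
    and "prob_space \<mu>" and "space \<mu> = M" and "sets \<mu> = sets (restrict_space borel M)"
    and "prob_space P"
    and "\<And>j. j < n \<Longrightarrow> X j \<in> measurable P \<mu>"
    and "\<And>j. j < n \<Longrightarrow> distr P \<mu> (X j) = \<mu>"
    and "prob_space.indep_vars P (\<lambda>_. \<mu>) X {..<n}"
    and "0 < p2" and "p2 \<le> 1/2" and "n \<ge> 4"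
  shows "\<exists>E \<in> sets P. measure P E \<ge> 1 - p2 \<and>
     (\<forall>\<omega>\<in>E. \<forall>i<n. \<forall>r>0.
        \<bar>sqrt (emp_measure n X \<omega> (geodesic_ball M (X i \<omega>) r))
          - sqrt (measure \<mu> (geodesic_ball M (X i \<omega>) r))\<bar>
        \<le> 2 * sqrt (- ln (p2 / (4 * real n ^ 2)) / real n))"
proof -
  note sm = assms(1) and pmu = assms(2) and sp = assms(3) and st = assms(4) and pP = assms(5)
    and rvX = assms(6) and dX = assms(7) and ind = assms(8) and p2 = assms(9,10) and n4 = assms(11)
  interpret P: prob_space P by (rule pP)
  interpret mu: prob_space \<mu> by (rule pmu)
  define L where "L = - ln (p2 / (4 * real n ^ 2))"
  define eps where "eps = 2 * sqrt (L / real n)"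
  have npos: "real n > 0" using n4 by simp
  have emp01: "0 \<le> emp_measure n X \<omega> W" "emp_measure n X \<omega> W \<le> 1" for \<omega> W
  proof -
    have "card {j \<in> {..<n}. X j \<omega> \<in> W} \<le> card {..<n}" by (intro card_mono) auto
    then show "0 \<le> emp_measure n X \<omega> W" "emp_measure n X \<omega> W \<le> 1"
      unfolding emp_measure_def using npos by (auto simp: divide_le_eq_1)
  qed
  show ?thesis
  proof (cases "eps \<ge> 1")
    case True
    show ?thesis
    proof (intro bexI[of _ "space P"] conjI ballI allI impI)
      show "space P \<in> sets P" by simp
      show "1 - p2 \<le> measure P (space P)" using p2 by (simp add: P.prob_space)
      fix \<omega> i r
      show "\<bar>sqrt (emp_measure n X \<omega> (geodesic_ball M (X i \<omega>) r))
          - sqrt (measure \<mu> (geodesic_ball M (X i \<omega>) r))\<bar>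
        \<le> 2 * sqrt (- ln (p2 / (4 * real n ^ 2)) / real n)"
      proof -
        have "\<bar>sqrt (emp_measure n X \<omega> (geodesic_ball M (X i \<omega>) r))
          - sqrt (measure \<mu> (geodesic_ball M (X i \<omega>) r))\<bar> \<le> 1"
          by (intro sqrt_diff_le1 emp01 measure_nonneg mu.prob_le_1)
        then show ?thesis using True unfolding eps_def L_def by linarith
      qed
    qed
  next
    case False
    hence nt: "2 * sqrt (L / real n) < 1" unfolding eps_def by simp
    define t where "t = 2 * sqrt (L / real n) - 2 * sqrt (1 / real n)"
    have t: "t > 0" unfolding t_def by (rule param(1)[OF p2 n4 L_def nt])
    have tL: "real (n - 1) * t^2 \<ge> L" unfolding t_def by (rule param(2)[OF p2 n4 L_def nt])
    have eL: "exp (- L) = p2 / (4 * real n ^ 2)" by (rule param(3)[OF p2 n4 L_def nt])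
    have epst: "eps = t + 2 * sqrt (1 / real n)" unfolding t_def eps_def by simp
    define J where "J i = {..<n} - {i}" for i
    define A where "A i = {p \<in> space (\<mu> \<Otimes>\<^sub>M PiM (J i) (\<lambda>_. \<mu>)). \<exists>r\<in>\<rat>. r > 0 \<and>
      \<bar>sqrt ((1 + real (card {j\<in>J i. snd p j \<in> geodesic_ball M (fst p) r})) / real n)
        - sqrt (measure \<mu> (geodesic_ball M (fst p) r))\<bar> > t + 2 * sqrt (1 / real n)}" for i
    define Bad where "Bad i = {\<omega>\<in>space P. (X i \<omega>, restrict (\<lambda>j. X j \<omega>) (J i)) \<in> A i}" for i
    have n2: "n \<ge> 2" using n4 by simp
    have Bad_ev: "Bad i \<in> sets P" if "i < n" for i
      unfolding Bad_def A_def J_def by (rule bad_i_bound(1)[OF sm pmu sp st pP rvX dX ind that n2 t])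
    define \<delta> where "\<delta> = 2 * (real n + 1) * exp (- real (n - 1) * t^2)"
    have Bad_p: "measure P (Bad i) \<le> \<delta>" if "i < n" for i
      unfolding Bad_def A_def J_def \<delta>_def by (rule bad_i_bound(2)[OF sm pmu sp st pP rvX dX ind that n2 t])
    have \<delta>b: "real n * \<delta> \<le> p2"
    proof -
      have "exp (- real (n - 1) * t^2) \<le> exp (- L)" using tL by simp
      hence "\<delta> \<le> 2 * (real n + 1) * (p2 / (4 * real n ^ 2))" unfolding \<delta>_def eL
        by (intro mult_left_mono) auto
      hence "real n * \<delta> \<le> real n * (2 * (real n + 1) * (p2 / (4 * real n ^ 2)))"
        using npos by (intro mult_left_mono) auto
      also have "\<dots> = p2 * (real n + 1) / (2 * real n)" using npos by (simp add: field_simps power2_eq_square)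
      also have "\<dots> \<le> p2"
      proof -
        have "(real n + 1) / (2 * real n) \<le> 1" using npos by (simp add: field_simps)
        then have "p2 * ((real n + 1) / (2 * real n)) \<le> p2 * 1" using p2 by (intro mult_left_mono) auto
        then show ?thesis by simp
      qed
      finally show ?thesis .
    qed
    define E where "E = space P - (\<Union>i\<in>{..<n}. Bad i)"
    have UB: "(\<Union>i\<in>{..<n}. Bad i) \<in> sets P" using Bad_ev by auto
    show ?thesis
    proof (intro bexI[of _ E] conjI ballI allI impI)
      show "E \<in> sets P" unfolding E_def using UB by auto
      have "measure P (\<Union>i\<in>{..<n}. Bad i) \<le> (\<Sum>i\<in>{..<n}. measure P (Bad i))"
        using Bad_ev by (intro P.finite_measure_subadditive_finite) auto
      also have "\<dots> \<le> (\<Sum>i\<in>{..<n}. \<delta>)" using Bad_p by (intro sum_mono) auto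
      also have "\<dots> = real n * \<delta>" by simp
      finally have "measure P (\<Union>i\<in>{..<n}. Bad i) \<le> p2" using \<delta>b by linarith
      then show "1 - p2 \<le> measure P E" unfolding E_def using P.prob_compl[OF UB] by linarith
      fix \<omega> i and r :: real
      assume \<omega>E: "\<omega> \<in> E" and i: "i < n" and r: "r > 0"
      have \<omega>: "\<omega> \<in> space P" and nb: "\<omega> \<notin> Bad i" using \<omega>E i unfolding E_def by auto
      define x where "x = X i \<omega>"
      have xM: "x \<in> M" unfolding x_def using measurable_space[OF rvX[OF i] \<omega>] sp by simp
      define B where "B s = geodesic_ball M x s" for s
      define h where "h s = \<bar>sqrt ((1 + real (card {j\<in>J i. X j \<omega> \<in> B s})) / real n) - sqrt (measure \<mu> (B s))\<bar>" for s
      have Bs: "\<And>s. B s \<in> sets \<mu>" unfolding B_def by (rule ball_sets[OF sm sp st xM])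
      have Bmono: "\<And>s s'. s \<le> s' \<Longrightarrow> B s \<subseteq> B s'" unfolding B_def by (rule ball_mono)
      have Blc: "\<And>s z. z \<in> B s \<Longrightarrow> \<exists>s'<s. z \<in> B s'" unfolding B_def by (rule ball_lc)
      have finJ: "finite (J i)" unfolding J_def by simp
      have spc: "(x, restrict (\<lambda>j. X j \<omega>) (J i)) \<in> space (\<mu> \<Otimes>\<^sub>M PiM (J i) (\<lambda>_. \<mu>))"
      proof -
        have "x \<in> space \<mu>" using xM sp by simp
        moreover have "restrict (\<lambda>j. X j \<omega>) (J i) \<in> space (PiM (J i) (\<lambda>_. \<mu>))"
          using measurable_space[OF rvX \<omega>] unfolding J_def by (auto simp: space_PiM)
        ultimately show ?thesis by (simp add: space_pair_measure)
      qed
      have hq: "h q \<le> eps" if "q \<in> \<rat>" "q > 0" for q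
      proof -
        have "(x, restrict (\<lambda>j. X j \<omega>) (J i)) \<notin> A i" using nb \<omega> unfolding Bad_def x_def by auto
        hence "\<not> (\<bar>sqrt ((1 + real (card {j\<in>J i. restrict (\<lambda>j. X j \<omega>) (J i) j \<in> geodesic_ball M x q})) / real n)
          - sqrt (measure \<mu> (geodesic_ball M x q))\<bar> > t + 2 * sqrt (1 / real n))"
          using spc that unfolding A_def by auto
        moreover have "{j\<in>J i. restrict (\<lambda>j. X j \<omega>) (J i) j \<in> geodesic_ball M x q} = {j\<in>J i. X j \<omega> \<in> B q}"
          unfolding B_def by auto
        ultimately show ?thesis unfolding h_def epst B_def by simp
      qed
      have hlim: "(h \<longlongrightarrow> h r) (at_left r)"
      proof -
        have ev: "eventually (\<lambda>s. {j\<in>J i. X j \<omega> \<in> B s} = {j\<in>J i. X j \<omega> \<in> B r}) (at_left r)"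
          by (rule card_left_eventually[OF finJ Bmono Blc])
        have t1: "((\<lambda>s. (1 + real (card {j\<in>J i. X j \<omega> \<in> B s})) / real n) \<longlongrightarrow>
                  (1 + real (card {j\<in>J i. X j \<omega> \<in> B r})) / real n) (at_left r)"
          by (rule tendsto_eventually) (rule eventually_mono[OF ev], simp)
        have t2: "((\<lambda>s. measure \<mu> (B s)) \<longlongrightarrow> measure \<mu> (B r)) (at_left r)"
          by (rule measure_left_tendsto[OF _ Bs Bmono Blc]) (rule mu.finite_measure_axioms)
        show ?thesis unfolding h_def
          by (intro tendsto_rabs tendsto_diff tendsto_real_sqrt t1 t2)
      qed
      have hr: "h r \<le> eps" by (rule lc_extend[OF r hlim hq])
      have "{j\<in>{..<n}. X j \<omega> \<in> B r} = insert i {j\<in>J i. X j \<omega> \<in> B r}"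
        using i ball_center[OF xM r] unfolding J_def B_def x_def by auto
      moreover have "i \<notin> {j\<in>J i. X j \<omega> \<in> B r}" unfolding J_def by simp
      ultimately have "card {j\<in>{..<n}. X j \<omega> \<in> B r} = 1 + card {j\<in>J i. X j \<omega> \<in> B r}"
        using finJ by simp
      hence "emp_measure n X \<omega> (B r) = (1 + real (card {j\<in>J i. X j \<omega> \<in> B r})) / real n"
        unfolding emp_measure_def by simp
      then show "\<bar>sqrt (emp_measure n X \<omega> (geodesic_ball M (X i \<omega>) r))
          - sqrt (measure \<mu> (geodesic_ball M (X i \<omega>) r))\<bar>
        \<le> 2 * sqrt (- ln (p2 / (4 * real n ^ 2)) / real n)"
        using hr unfolding h_def eps_def L_def B_def x_def by simp
    qed
  qed
qed

end
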